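(* Let $N\ge2$, let $\Omega\subset\mathbb{R}^N$ be a bounded open set with $C^2$ boundary, and let $g\in L^\infty(\mathbb{R}^N\setminus\Omega)$ satisfy $\int_1^\infty\frac{|\tilde g(r)|}{r}dr<\infty$. Let $\tilde r_\Omega:=\sup_{x\in\Omega}|x|+\operatorname{diam}\Omega+1$. Then for every $\varepsilon>0$ and every $r>\tilde r_\Omega$, the function $$x\mapsto\delta_\Omega^\varepsilon(x)\int_{B_r\setminus\Omega}\frac{g(y)}{|x-y|^N}dy$$ is continuous on $\Omega$ and extends continuously to $\overline\Omega$, and the limit $$\lim_{r\to\infty}\delta_\Omega^\varepsilon(x)\int_{B_r\setminus\Omega}\frac{g(y)}{|x-y|^N}dy$$ exists uniformly in $x\in\Omega$.
   Context: $B_r$ is the ball of radius $r$ centered at $0$, $\tilde g(r)=\frac{1}{r^{N-1}\omega_{N-1}}\int_{S_r}g\,d\sigma$ the spherical mean of $g$ over the sphere $S_r$ of radius $r$ centered at $0$ ($\omega_{N-1}$ the area of the unit sphere), and $\delta_\Omega(x)=\operatorname{dist}(x,\partial\Omega)$. *)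

theory Defs
  imports "HOL-Analysis.Analysis"
begin

definition C2_on :: "'a::euclidean_space set \<Rightarrow> ('a \<Rightarrow> real) \<Rightarrow> bool" where
  "C2_on S f \<longleftrightarrow>
     (\<exists>(f' :: 'a \<Rightarrow> ('a \<Rightarrow>\<^sub>L real)) (f'' :: 'a \<Rightarrow> ('a \<Rightarrow>\<^sub>L ('a \<Rightarrow>\<^sub>L real))).
        (\<forall>x\<in>S. (f has_derivative blinfun_apply (f' x)) (at x)) \<and>
        (\<forall>x\<in>S. (f' has_derivative blinfun_apply (f'' x)) (at x)) \<and>
        continuous_on S f'')"

text \<open>C^2 boundary: near every boundary point p, after choosing a unit direction nu,
  the set is the subgraph (in direction nu) of a C^2 function of the component
  orthogonal to nu (the function is applied to the orthogonal projection onto the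
  hyperplane nu-perp, so it is effectively a C^2 function on that hyperplane).\<close>
definition C2_boundary :: "'a::euclidean_space set \<Rightarrow> bool" where
  "C2_boundary \<Omega> \<longleftrightarrow>
     (\<forall>p\<in>frontier \<Omega>. \<exists>r>0. \<exists>(\<nu>::'a) (\<phi>::'a \<Rightarrow> real).
        norm \<nu> = 1 \<and> C2_on UNIV \<phi> \<and>
        \<Omega> \<inter> ball p r = {x \<in> ball p r. x \<bullet> \<nu> < \<phi> (x - (x \<bullet> \<nu>) *\<^sub>R \<nu>)})"

definition bdist :: "'a::euclidean_space set \<Rightarrow> 'a \<Rightarrow> real" where
  "bdist \<Omega> x = infdist x (frontier \<Omega>)"

text \<open>Spherical mean over the sphere of radius r centred at 0:
  (1/(r^(N-1) omega_(N-1))) \<integral>_{S_r} g d\<sigma>. The normalised surface measure on the unit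
  sphere is expressed through the cone construction
  \<sigma>(A) = N |{t\<theta> : 0<t\<le>1, \<theta>\<in>A}|, \<omega>_(N-1) = N |B_1|, giving
  (1/|B_1|) \<integral>_{B_1} g(r x/|x|) dx.\<close>
definition spherical_mean :: "('a::euclidean_space \<Rightarrow> real) \<Rightarrow> real \<Rightarrow> real" where
  "spherical_mean g r =
     (LINT x : ball 0 1 | lebesgue. g (r *\<^sub>R (x /\<^sub>R norm x))) / measure lebesgue (ball (0::'a) 1)"

end

theory Submission
  imports Defs
begin

lemma tail_powr_nn:
  fixes a :: real and n :: nat
  assumes "a > 0" "n \<ge> 1"
  shows "(\<integral>\<^sup>+t. indicator {a..} t * ennreal (real n * t powr (-real n - 1)) \<partial>lborel) = ennreal (a powr (-real n))"
proof -
  have "((\<lambda>t. t powr (-real n - 1)) has_integral -(a powr (-real n - 1 + 1)) / (-real n - 1 + 1)) {a..}"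
    by (rule has_integral_powr_to_inf) (use assms in auto)
  then have "((\<lambda>t. real n * t powr (-real n - 1)) has_integral real n * (-(a powr (-real n - 1 + 1)) / (-real n - 1 + 1))) {a..}"
    by (rule has_integral_mult_right)
  moreover have "real n * (-(a powr (-real n - 1 + 1)) / (-real n - 1 + 1)) = a powr (-real n)"
    using assms by simp
  ultimately have "((\<lambda>t. real n * t powr (-real n - 1)) has_integral a powr (-real n)) {a..}" by simp
  from nn_integral_has_integral_lebesgue[OF _ this] have
    "(\<integral>\<^sup>+t. ennreal (indicator {a..} t * (real n * t powr (-real n - 1))) \<partial>lborel) = ennreal (a powr (-real n))"
    using assms by simp
  then show ?thesis
    by (simp add: indicator_mult_ennreal mult.commute)
qed

lemma ennreal_mult3:
  fixes a b c :: real
  assumes "0 \<le> a" "0 \<le> b" "0 \<le> c"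
  shows "ennreal a * (ennreal b * (ennreal c * F)) = ennreal (a * b * c) * F"
  using assms by (simp add: ennreal_mult mult.assoc)

lemma polar_nn:
  fixes f :: "'a::euclidean_space \<Rightarrow> ennreal"
  assumes f[measurable]: "f \<in> borel_measurable borel"
  shows "(\<integral>\<^sup>+s. indicator {0<..} s * ennreal (real DIM('a) * s ^ (DIM('a) - 1)) *
            (\<integral>\<^sup>+x. indicator (ball 0 1) x * f (s *\<^sub>R (x /\<^sub>R norm x)) \<partial>lborel) \<partial>lborel)
         = (\<integral>\<^sup>+y. f y \<partial>lborel)"
proof -
  define n where "n = DIM('a)"
  have n1: "n \<ge> 1" unfolding n_def by (simp add: DIM_positive Suc_leI)
  define w :: "real \<Rightarrow> ennreal" where "w s = indicator {0<..} s * ennreal (real n * s ^ (n - 1))" for s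
  have wm[measurable]: "w \<in> borel_measurable borel" unfolding w_def by measurable
  have [measurable]: "ball (0::'a) 1 \<in> sets borel" by simp
  have "(\<integral>\<^sup>+s. indicator {0<..} s * ennreal (real DIM('a) * s ^ (DIM('a) - 1)) *
            (\<integral>\<^sup>+x. indicator (ball 0 1) x * f (s *\<^sub>R (x /\<^sub>R norm x)) \<partial>lborel) \<partial>lborel)
       = (\<integral>\<^sup>+s. (\<integral>\<^sup>+x. w s * (indicator (ball 0 1) x * f (s *\<^sub>R (x /\<^sub>R norm x))) \<partial>lborel) \<partial>lborel)"
    by (intro nn_integral_cong) (simp add: nn_integral_cmult w_def n_def)
  also have "\<dots> = (\<integral>\<^sup>+x. (\<integral>\<^sup>+s. w s * (indicator (ball 0 1) x * f (s *\<^sub>R (x /\<^sub>R norm x))) \<partial>lborel) \<partial>lborel)"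
    by (rule lborel_pair.Fubini') measurable
  also have "\<dots> = (\<integral>\<^sup>+x. indicator (ball 0 1) x * (ennreal (norm x ^ n) * (\<integral>\<^sup>+t. w t * f (t *\<^sub>R x) \<partial>lborel)) \<partial>lborel)"
  proof (rule nn_integral_cong_AE)
    show "AE x in lborel. (\<integral>\<^sup>+s. w s * (indicator (ball 0 1) x * f (s *\<^sub>R (x /\<^sub>R norm x))) \<partial>lborel) =
        indicator (ball 0 1) x * (ennreal (norm x ^ n) * (\<integral>\<^sup>+t. w t * f (t *\<^sub>R x) \<partial>lborel))"
      using AE_lborel_singleton[of 0]
    proof eventually_elim
      case (elim x)
      then have nx: "norm x > 0" by simp
      have "(\<integral>\<^sup>+s. w s * (indicator (ball 0 1) x * f (s *\<^sub>R (x /\<^sub>R norm x))) \<partial>lborel)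
          = indicator (ball 0 1) x * (\<integral>\<^sup>+s. w s * f (s *\<^sub>R (x /\<^sub>R norm x)) \<partial>lborel)"
        by (subst nn_integral_cmult[symmetric]) (auto intro!: nn_integral_cong simp: ac_simps)
      also have "(\<integral>\<^sup>+s. w s * f (s *\<^sub>R (x /\<^sub>R norm x)) \<partial>lborel)
          = ennreal \<bar>norm x\<bar> * (\<integral>\<^sup>+t. w (0 + norm x * t) * f ((0 + norm x * t) *\<^sub>R (x /\<^sub>R norm x)) \<partial>lborel)"
        by (rule nn_integral_real_affine) (use nx in auto)
      also have "(\<integral>\<^sup>+t. w (0 + norm x * t) * f ((0 + norm x * t) *\<^sub>R (x /\<^sub>R norm x)) \<partial>lborel)
          = (\<integral>\<^sup>+t. ennreal (norm x ^ (n - 1)) * (w t * f (t *\<^sub>R x)) \<partial>lborel)"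
      proof (rule nn_integral_cong)
        fix t :: real
        have e1: "(0 + norm x * t) *\<^sub>R (x /\<^sub>R norm x) = t *\<^sub>R x" using nx by simp
        have e2: "w (0 + norm x * t) = ennreal (norm x ^ (n - 1)) * w t"
          using nx by (auto simp: w_def indicator_def zero_less_mult_iff power_mult_distrib ennreal_mult' [symmetric] mult_ac)
        show "w (0 + norm x * t) * f ((0 + norm x * t) *\<^sub>R (x /\<^sub>R norm x)) =
             ennreal (norm x ^ (n - 1)) * (w t * f (t *\<^sub>R x))" unfolding e1 e2 by (simp add: mult_ac)
      qed
      also have "\<dots> = ennreal (norm x ^ (n - 1)) * (\<integral>\<^sup>+t. w t * f (t *\<^sub>R x) \<partial>lborel)"
        by (rule nn_integral_cmult) measurable
      finally show ?case
        using n1 nx by (simp add: ennreal_mult'[symmetric] mult.assoc[symmetric] power_Suc[symmetric] del: power_Suc)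
    qed
  qed
  also have "\<dots> = (\<integral>\<^sup>+x. (\<integral>\<^sup>+t. w t * (indicator (ball 0 1) x * ennreal (norm x ^ n) * f (t *\<^sub>R x)) \<partial>lborel) \<partial>lborel)"
  proof (rule nn_integral_cong)
    fix x :: 'a
    have "(\<integral>\<^sup>+t. w t * (indicator (ball 0 1) x * ennreal (norm x ^ n) * f (t *\<^sub>R x)) \<partial>lborel)
       = (\<integral>\<^sup>+t. (indicator (ball 0 1) x * ennreal (norm x ^ n)) * (w t * f (t *\<^sub>R x)) \<partial>lborel)"
      by (rule nn_integral_cong) (simp add: mult_ac)
    also have "\<dots> = (indicator (ball 0 1) x * ennreal (norm x ^ n)) * (\<integral>\<^sup>+t. w t * f (t *\<^sub>R x) \<partial>lborel)"
      by (rule nn_integral_cmult) measurable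
    finally show "indicator (ball 0 1) x * (ennreal (norm x ^ n) * (\<integral>\<^sup>+t. w t * f (t *\<^sub>R x) \<partial>lborel))
       = (\<integral>\<^sup>+t. w t * (indicator (ball 0 1) x * ennreal (norm x ^ n) * f (t *\<^sub>R x)) \<partial>lborel)"
      by (simp add: mult_ac)
  qed
  also have "\<dots> = (\<integral>\<^sup>+t. (\<integral>\<^sup>+x. w t * (indicator (ball 0 1) x * ennreal (norm x ^ n) * f (t *\<^sub>R x)) \<partial>lborel) \<partial>lborel)"
    by (rule lborel_pair.Fubini'[symmetric]) measurable
  also have "\<dots> = (\<integral>\<^sup>+t. (\<integral>\<^sup>+y. indicator {0<..} t * ennreal (real n * t powr (-real n - 1)) *
                 ((if norm y < t then 1 else 0) * ennreal (norm y ^ n) * f y) \<partial>lborel) \<partial>lborel)"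
  proof (rule nn_integral_cong)
    fix t :: real
    show "(\<integral>\<^sup>+x. w t * (indicator (ball 0 1) x * ennreal (norm x ^ n) * f (t *\<^sub>R x)) \<partial>lborel) =
       (\<integral>\<^sup>+y. indicator {0<..} t * ennreal (real n * t powr (-real n - 1)) *
                 ((if norm y < t then 1 else 0) * ennreal (norm y ^ n) * f y) \<partial>lborel)"
    proof (cases "t > 0")
      case False
      then show ?thesis by (simp add: w_def)
    next
      case t: True
      have "(\<integral>\<^sup>+x. w t * (indicator (ball 0 1) x * ennreal (norm x ^ n) * f (t *\<^sub>R x)) \<partial>lborel)
          = (\<integral>\<^sup>+x. w t * (indicator (ball 0 1) x * ennreal (norm x ^ n) * f (t *\<^sub>R x))
               \<partial>density (distr lborel borel (\<lambda>x. 0 + (1/t) *\<^sub>R x)) (\<lambda>_. ennreal (\<bar>1/t\<bar> ^ DIM('a))))"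
        using lborel_affine[of "1/t" "0::'a"] t by simp
      also have "\<dots> = (\<integral>\<^sup>+y. ennreal (\<bar>1/t\<bar> ^ DIM('a)) * (w t * (indicator (ball 0 1) ((1/t) *\<^sub>R y) *
             ennreal (norm ((1/t) *\<^sub>R y) ^ n) * f (t *\<^sub>R ((1/t) *\<^sub>R y)))) \<partial>lborel)"
        by (simp add: nn_integral_density nn_integral_distr)
      also have "\<dots> = (\<integral>\<^sup>+y. indicator {0<..} t * ennreal (real n * t powr (-real n - 1)) *
                 ((if norm y < t then 1 else 0) * ennreal (norm y ^ n) * f y) \<partial>lborel)"
      proof (rule nn_integral_cong)
        fix y :: 'a
        have e1: "indicator (ball 0 1) ((1/t) *\<^sub>R y) = (if norm y < t then 1 else (0::ennreal))"
          using t by (auto simp: indicator_def field_simps)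
        have e2: "norm ((1/t) *\<^sub>R y) ^ n = norm y ^ n / t ^ n"
          using t by (simp add: power_divide)
        have e3: "t *\<^sub>R ((1/t) *\<^sub>R y) = y" using t by simp
        have e4: "(1/t) ^ n * (real n * t ^ (n - 1)) * (1 / t ^ n) = real n * t powr (-real n - 1)"
        proof -
          have "t ^ (n - 1) = t powr (real n - 1)" using t n1 by (simp add: powr_realpow [symmetric] of_nat_diff)
          moreover have "(1/t) ^ n = t powr (- real n)" using t by (simp add: powr_minus powr_realpow divide_inverse power_inverse)
          moreover have "1 / t ^ n = t powr (- real n)" using t by (simp add: powr_minus powr_realpow divide_inverse)
          moreover have "t powr (- real n - 1) = t powr (- real n) / t" using t by (simp add: powr_diff)
          ultimately show ?thesis using t by (simp add: powr_add[symmetric] mult_ac)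
        qed
        show "ennreal (\<bar>1/t\<bar> ^ DIM('a)) * (w t * (indicator (ball 0 1) ((1/t) *\<^sub>R y) *
             ennreal (norm ((1/t) *\<^sub>R y) ^ n) * f (t *\<^sub>R ((1/t) *\<^sub>R y)))) = indicator {0<..} t * ennreal (real n * t powr (-real n - 1)) *
                 ((if norm y < t then 1 else 0) * ennreal (norm y ^ n) * f y)"
        proof (cases "norm y < t")
          case False
          then show ?thesis unfolding e1 by simp
        next
          case yt: True
          have "ennreal (\<bar>1/t\<bar> ^ DIM('a)) * (w t * (indicator (ball 0 1) ((1/t) *\<^sub>R y) *
             ennreal (norm ((1/t) *\<^sub>R y) ^ n) * f (t *\<^sub>R ((1/t) *\<^sub>R y))))
             = ennreal ((1/t) ^ n) * (ennreal (real n * t ^ (n - 1)) * (ennreal (norm y ^ n / t ^ n) * f y))"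
            unfolding e1 e2 e3 n_def[symmetric] using t yt by (simp add: w_def)
          also have "\<dots> = ennreal ((1/t) ^ n * (real n * t ^ (n - 1)) * (norm y ^ n / t ^ n)) * f y"
            using t by (intro ennreal_mult3) auto
          also have "(1/t) ^ n * (real n * t ^ (n - 1)) * (norm y ^ n / t ^ n)
              = ((1/t) ^ n * (real n * t ^ (n - 1)) * (1 / t ^ n)) * norm y ^ n"
            by simp
          also have "\<dots> = real n * t powr (-real n - 1) * norm y ^ n" unfolding e4 ..
          also have "ennreal (real n * t powr (-real n - 1) * norm y ^ n) * f y
              = indicator {0<..} t * ennreal (real n * t powr (-real n - 1)) *
                 ((if norm y < t then 1 else 0) * ennreal (norm y ^ n) * f y)"
            using t yt by (simp add: ennreal_mult' mult.assoc)
          finally show ?thesis .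
        qed
      qed
      finally show ?thesis .
    qed
  qed
  also have "\<dots> = (\<integral>\<^sup>+y. (\<integral>\<^sup>+t. indicator {0<..} t * ennreal (real n * t powr (-real n - 1)) *
                 ((if norm y < t then 1 else 0) * ennreal (norm y ^ n) * f y) \<partial>lborel) \<partial>lborel)"
    by (rule lborel_pair.Fubini') measurable
  also have "\<dots> = (\<integral>\<^sup>+y. f y \<partial>lborel)"
  proof (rule nn_integral_cong_AE)
    show "AE y in lborel. (\<integral>\<^sup>+t. indicator {0<..} t * ennreal (real n * t powr (-real n - 1)) *
                 ((if norm y < t then 1 else 0) * ennreal (norm y ^ n) * f y) \<partial>lborel) = f y"
      using AE_lborel_singleton[of 0]
    proof eventually_elim
      case (elim y)
      then have ny: "norm y > 0" by simp
      have "(\<integral>\<^sup>+t. indicator {0<..} t * ennreal (real n * t powr (-real n - 1)) *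
                 ((if norm y < t then 1 else 0) * ennreal (norm y ^ n) * f y) \<partial>lborel)
           = (\<integral>\<^sup>+t. (ennreal (norm y ^ n) * f y) * (indicator {norm y..} t * ennreal (real n * t powr (-real n - 1))) \<partial>lborel)"
      proof (rule nn_integral_cong_AE)
        show "AE t in lborel. indicator {0<..} t * ennreal (real n * t powr (-real n - 1)) *
                 ((if norm y < t then 1 else 0) * ennreal (norm y ^ n) * f y) = 
             (ennreal (norm y ^ n) * f y) * (indicator {norm y..} t * ennreal (real n * t powr (-real n - 1)))"
          using AE_lborel_singleton[of "norm y"]
        proof eventually_elim
          case (elim t)
          show ?case
          proof (cases "norm y < t")
            case True
            then have "0 < t" using ny by linarith
            then show ?thesis using True by (simp add: indicator_def mult_ac)
          next
            case False
            then have "t < norm y" using elim by linarith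
            then show ?thesis using False by (simp add: indicator_def mult_ac)
          qed
        qed
      qed
      also have "\<dots> = (ennreal (norm y ^ n) * f y) * ennreal (norm y powr (-real n))"
        by (subst nn_integral_cmult) (use tail_powr_nn[OF ny n1] in auto)
      also have "\<dots> = f y"
      proof -
        have "norm y ^ n * norm y powr (-real n) = 1"
          using ny by (simp add: powr_minus powr_realpow)
        then show ?thesis
          using ny by (simp add: mult_ac ennreal_mult'[symmetric])
      qed
      finally show ?case .
    qed
  qed
  finally show ?thesis .
qed

lemma radial_nn:
  fixes \<phi> :: "real \<Rightarrow> ennreal"
  assumes [measurable]: "\<phi> \<in> borel_measurable borel"
  shows "(\<integral>\<^sup>+y. \<phi> (norm (y::'a::euclidean_space)) \<partial>lborel) =
    (\<integral>\<^sup>+s. indicator {0<..} s * ennreal (real DIM('a) * s ^ (DIM('a) - 1)) *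
          (emeasure lborel (ball (0::'a) 1) * \<phi> s) \<partial>lborel)"
proof -
  have [measurable]: "ball (0::'a) 1 \<in> sets borel" by simp
  have "(\<integral>\<^sup>+y. \<phi> (norm (y::'a)) \<partial>lborel) =
    (\<integral>\<^sup>+s. indicator {0<..} s * ennreal (real DIM('a) * s ^ (DIM('a) - 1)) *
            (\<integral>\<^sup>+x. indicator (ball (0::'a) 1) x * \<phi> (norm (s *\<^sub>R (x /\<^sub>R norm x))) \<partial>lborel) \<partial>lborel)"
  proof -
    have m: "(\<lambda>y::'a. \<phi> (norm y)) \<in> borel_measurable borel" by measurable
    show ?thesis by (simp only: polar_nn[OF m])
  qed
  also have "\<dots> = (\<integral>\<^sup>+s. indicator {0<..} s * ennreal (real DIM('a) * s ^ (DIM('a) - 1)) *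
          (emeasure lborel (ball (0::'a) 1) * \<phi> s) \<partial>lborel)"
  proof (rule nn_integral_cong)
    fix s :: real
    show "indicator {0<..} s * ennreal (real DIM('a) * s ^ (DIM('a) - 1)) *
            (\<integral>\<^sup>+x. indicator (ball (0::'a) 1) x * \<phi> (norm (s *\<^sub>R (x /\<^sub>R norm x))) \<partial>lborel) =
          indicator {0<..} s * ennreal (real DIM('a) * s ^ (DIM('a) - 1)) *
          (emeasure lborel (ball (0::'a) 1) * \<phi> s)"
    proof (cases "s > 0")
      case False then show ?thesis by simp
    next
      case True
      have "(\<integral>\<^sup>+x. indicator (ball (0::'a) 1) x * \<phi> (norm (s *\<^sub>R (x /\<^sub>R norm x))) \<partial>lborel)
          = (\<integral>\<^sup>+x. \<phi> s * indicator (ball (0::'a) 1) x \<partial>lborel)"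
      proof (rule nn_integral_cong_AE)
        show "AE x in lborel. indicator (ball (0::'a) 1) x * \<phi> (norm (s *\<^sub>R (x /\<^sub>R norm x))) = \<phi> s * indicator (ball (0::'a) 1) x"
          using AE_lborel_singleton[of "0::'a"]
        proof eventually_elim
          case (elim x)
          then have "norm (s *\<^sub>R (x /\<^sub>R norm x)) = s" using True by simp
          then show ?case by (simp add: mult.commute)
        qed
      qed
      also have "\<dots> = \<phi> s * emeasure lborel (ball (0::'a) 1)"
        by (rule nn_integral_cmult_indicator) simp
      finally show ?thesis by (simp add: mult.commute)
    qed
  qed
  finally show ?thesis .
qed

lemma ln_has_integral:
  fixes a b :: real assumes "0 < a" "a \<le> b"
  shows "((\<lambda>s. 1 / s) has_integral (ln b - ln a)) {a..b}"
proof -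
  have "((\<lambda>s. 1 / s) has_integral (ln b - ln a)) {a..b}"
  proof (rule fundamental_theorem_of_calculus[where f = ln])
    show "a \<le> b" by fact
    fix x assume "x \<in> {a..b}"
    then have "x > 0" using assms by auto
    then have "(ln has_real_derivative (1 / x)) (at x within {a..b})"
      by (auto intro!: derivative_eq_intros)
    then show "(ln has_vector_derivative 1 / x) (at x within {a..b})"
      by (simp add: has_real_derivative_iff_has_vector_derivative)
  qed
  then show ?thesis .
qed

lemma log_int:
  fixes a b :: real
  assumes "0 < a" "a \<le> b"
  shows "(\<integral>\<^sup>+z. indicator {a..b} (norm (z::'a::euclidean_space)) * ennreal (1 / norm z ^ DIM('a)) \<partial>lborel)
       = ennreal (real DIM('a) * measure lborel (ball (0::'a) 1) * ln (b / a))"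
proof -
  define V where "V = measure lborel (ball (0::'a) 1)"
  have EV: "emeasure lborel (ball (0::'a) 1) = ennreal V"
    unfolding V_def using emeasure_lborel_ball_finite[of "0::'a" 1]
    by (simp add: emeasure_eq_ennreal_measure)
  have V0: "V \<ge> 0" unfolding V_def by simp
  have "(\<integral>\<^sup>+z. indicator {a..b} (norm (z::'a)) * ennreal (1 / norm z ^ DIM('a)) \<partial>lborel)
     = (\<integral>\<^sup>+s. indicator {0<..} s * ennreal (real DIM('a) * s ^ (DIM('a) - 1)) *
          (emeasure lborel (ball (0::'a) 1) * (indicator {a..b} s * ennreal (1 / s ^ DIM('a)))) \<partial>lborel)"
    by (rule radial_nn[where \<phi> = "\<lambda>s. indicator {a..b} s * ennreal (1 / s ^ DIM('a))"]) measurable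
  also have "\<dots> = (\<integral>\<^sup>+s. ennreal (real DIM('a) * V) * ennreal (indicator {a..b} s * (1 / s)) \<partial>lborel)"
  proof (rule nn_integral_cong)
    fix s :: real
    show "indicator {0<..} s * ennreal (real DIM('a) * s ^ (DIM('a) - 1)) *
          (emeasure lborel (ball (0::'a) 1) * (indicator {a..b} s * ennreal (1 / s ^ DIM('a)))) =
          ennreal (real DIM('a) * V) * ennreal (indicator {a..b} s * (1 / s))"
    proof (cases "s \<in> {a..b}")
      case False then show ?thesis by simp
    next
      case True
      then have s0: "s > 0" using assms by auto
      have "s ^ (DIM('a) - 1) * (1 / s ^ DIM('a)) = 1 / s"
        using s0 by (simp add: power_eq_if[of s "DIM('a)"] DIM_positive del: power_Suc)
      then have "real DIM('a) * s ^ (DIM('a) - 1) * (V * (1 / s ^ DIM('a))) = real DIM('a) * V * (1 / s)"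
      proof -
        assume e: "s ^ (DIM('a) - 1) * (1 / s ^ DIM('a)) = 1 / s"
        have "real DIM('a) * s ^ (DIM('a) - 1) * (V * (1 / s ^ DIM('a))) = real DIM('a) * V * (s ^ (DIM('a) - 1) * (1 / s ^ DIM('a)))"
          by (simp only: mult_ac)
        then show ?thesis by (simp only: e)
      qed
      then show ?thesis using True s0 V0 unfolding EV
        by (simp add: ennreal_mult'[symmetric] ennreal_mult''[symmetric] mult.assoc)
    qed
  qed
  also have "\<dots> = ennreal (real DIM('a) * V) * (\<integral>\<^sup>+s. ennreal (indicator {a..b} s * (1 / s)) \<partial>lborel)"
    by (rule nn_integral_cmult) measurable
  also have "(\<integral>\<^sup>+s. ennreal (indicator {a..b} s * (1 / s)) \<partial>lborel) = ennreal (ln b - ln a)"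
    using nn_integral_has_integral_lebesgue[OF _ ln_has_integral[OF assms]] assms by simp
  also have "ln b - ln a = ln (b / a)" using assms by (simp add: ln_div)
  finally show ?thesis unfolding V_def
    using assms by (simp add: ennreal_mult'[symmetric] mult.assoc)
qed

lemma tail_int:
  fixes a :: real
  assumes "0 < a"
  shows "(\<integral>\<^sup>+z. indicator {a..} (norm (z::'a::euclidean_space)) * ennreal (1 / norm z ^ (DIM('a) + 1)) \<partial>lborel)
       = ennreal (real DIM('a) * measure lborel (ball (0::'a) 1) / a)"
proof -
  define V where "V = measure lborel (ball (0::'a) 1)"
  have EV: "emeasure lborel (ball (0::'a) 1) = ennreal V"
    unfolding V_def using emeasure_lborel_ball_finite[of "0::'a" 1]
    by (simp add: emeasure_eq_ennreal_measure)
  have V0: "V \<ge> 0" unfolding V_def by simp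
  have "(\<integral>\<^sup>+z. indicator {a..} (norm (z::'a)) * ennreal (1 / norm z ^ (DIM('a) + 1)) \<partial>lborel)
     = (\<integral>\<^sup>+s. indicator {0<..} s * ennreal (real DIM('a) * s ^ (DIM('a) - 1)) *
          (emeasure lborel (ball (0::'a) 1) * (indicator {a..} s * ennreal (1 / s ^ (DIM('a) + 1)))) \<partial>lborel)"
    by (rule radial_nn[where \<phi> = "\<lambda>s. indicator {a..} s * ennreal (1 / s ^ (DIM('a) + 1))"]) measurable
  also have "\<dots> = (\<integral>\<^sup>+s. ennreal (real DIM('a) * V) * (indicator {a..} s * ennreal (real 1 * s powr (- real 1 - 1))) \<partial>lborel)"
  proof (rule nn_integral_cong)
    fix s :: real
    show "indicator {0<..} s * ennreal (real DIM('a) * s ^ (DIM('a) - 1)) *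
          (emeasure lborel (ball (0::'a) 1) * (indicator {a..} s * ennreal (1 / s ^ (DIM('a) + 1)))) =
          ennreal (real DIM('a) * V) * (indicator {a..} s * ennreal (real 1 * s powr (- real 1 - 1)))"
    proof (cases "s \<in> {a..}")
      case False then show ?thesis by simp
    next
      case True
      then have s0: "s > 0" using assms by auto
      have "s ^ (DIM('a) - 1) * (1 / s ^ (DIM('a) + 1)) = s powr (- real 1 - 1)"
      proof -
        have "s ^ (DIM('a) + 1) = s ^ (DIM('a) - 1) * s ^ 2"
          by (simp add: power_add[symmetric] DIM_positive Suc_leI)
        moreover have "s powr (- real 1 - 1) = 1 / s ^ 2"
          using s0 by (simp add: powr_minus powr_realpow divide_inverse)
        ultimately show ?thesis using s0 by simp
      qed
      then have "real DIM('a) * s ^ (DIM('a) - 1) * (V * (1 / s ^ (DIM('a) + 1))) = real DIM('a) * V * (real 1 * s powr (- real 1 - 1))"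
      proof -
        assume e: "s ^ (DIM('a) - 1) * (1 / s ^ (DIM('a) + 1)) = s powr (- real 1 - 1)"
        have "real DIM('a) * s ^ (DIM('a) - 1) * (V * (1 / s ^ (DIM('a) + 1))) = real DIM('a) * V * (s ^ (DIM('a) - 1) * (1 / s ^ (DIM('a) + 1)))"
          by (simp only: mult_ac)
        then show ?thesis by (simp only: e mult_1)
      qed
      then show ?thesis using True s0 V0 unfolding EV
        by (simp add: ennreal_mult'[symmetric] ennreal_mult''[symmetric] mult.assoc)
    qed
  qed
  also have "\<dots> = ennreal (real DIM('a) * V) * (\<integral>\<^sup>+s. indicator {a..} s * ennreal (real 1 * s powr (- real 1 - 1)) \<partial>lborel)"
    by (rule nn_integral_cmult) measurable
  also have "(\<integral>\<^sup>+s. indicator {a..} s * ennreal (real 1 * s powr (- real 1 - 1)) \<partial>lborel) = ennreal (a powr (- real 1))"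
    by (rule tail_powr_nn) (use assms in auto)
  finally show ?thesis unfolding V_def
    using assms by (simp add: ennreal_mult'[symmetric] powr_minus divide_inverse mult.assoc)
qed

lemma nn_integral_reflect_translate:
  fixes F :: "'a::euclidean_space \<Rightarrow> ennreal"
  assumes [measurable]: "F \<in> borel_measurable borel"
  shows "(\<integral>\<^sup>+y. F (x - y) \<partial>lborel) = (\<integral>\<^sup>+z. F z \<partial>lborel)"
proof -
  have eq: "distr lborel borel ((-) x) = lborel" using lborel_affine[of "-1" x] by (simp add: density_1)
  have "(\<integral>\<^sup>+z. F z \<partial>lborel) = (\<integral>\<^sup>+z. F (x - (x - z)) \<partial>lborel)" by simp
  also have "\<dots> = (\<integral>\<^sup>+y. F (x - y) \<partial>distr lborel borel ((-) x))"
    by (rule nn_integral_distr[symmetric]) measurable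
  also have "\<dots> = (\<integral>\<^sup>+y. F (x - y) \<partial>lborel)" by (simp only: eq)
  finally show ?thesis by simp
qed

lemma pow_diff_le:
  fixes a b :: real
  assumes "0 \<le> a" "a \<le> b"
  shows "b ^ n - a ^ n \<le> real n * b ^ (n - 1) * (b - a)"
proof (induction n)
  case 0 then show ?case by simp
next
  case (Suc n)
  have "b ^ Suc n - a ^ Suc n = b * (b ^ n - a ^ n) + a ^ n * (b - a)"
    by (simp add: algebra_simps)
  also have "\<dots> \<le> b * (real n * b ^ (n - 1) * (b - a)) + b ^ n * (b - a)"
    using assms Suc by (intro add_mono mult_left_mono mult_right_mono power_mono) auto
  also have "b * (real n * b ^ (n - 1) * (b - a)) = real n * (b * b ^ (n - 1)) * (b - a)" by simp
  also have "real n * (b * b ^ (n - 1)) = real n * b ^ n"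
    by (cases n) auto
  finally show ?case by (simp add: algebra_simps)
qed

lemma inv_pow_diff:
  fixes a b :: real
  assumes "0 < a" "0 < b"
  shows "\<bar>1 / a ^ n - 1 / b ^ n\<bar> \<le> real n * \<bar>a - b\<bar> / min a b ^ (n + 1)"
proof -
  have *: "\<bar>1 / a ^ n - 1 / b ^ n\<bar> \<le> real n * \<bar>a - b\<bar> / min a b ^ (n + 1)" if "0 < a" "a \<le> b" for a b :: real
  proof (cases n)
    case 0 then show ?thesis by simp
  next
    case (Suc m)
    have "\<bar>1 / a ^ n - 1 / b ^ n\<bar> = (b ^ n - a ^ n) / (a ^ n * b ^ n)"
      using that by (simp add: field_simps power_mono)
    also have "\<dots> \<le> (real n * b ^ (n - 1) * (b - a)) / (a ^ n * b ^ n)"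
      using that by (intro divide_right_mono pow_diff_le) auto
    also have "\<dots> = real n * (b - a) / (a ^ n * b)"
    proof -
      have bn: "b ^ n = b * b ^ m" "n - 1 = m" using Suc by auto
      show ?thesis unfolding bn using that by (simp add: field_simps)
    qed
    also have "\<dots> \<le> real n * (b - a) / (a ^ n * a)"
      using that by (intro divide_left_mono mult_left_mono mult_pos_pos) auto
    also have "\<dots> = real n * \<bar>a - b\<bar> / min a b ^ (n + 1)"
    proof -
      have "min a b = a" "\<bar>a - b\<bar> = b - a" "a ^ (n + 1) = a ^ n * a" using that by auto
      then show ?thesis by simp
    qed
    finally show ?thesis .
  qed
  show ?thesis
  proof (cases "a \<le> b")
    case True then show ?thesis using * assms by simp
  next
    case False then show ?thesis using *[of b a] assms by (simp add: abs_minus_commute min.commute)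
  qed
qed

lemma frontier_dist:
  fixes \<Omega> :: "'a::euclidean_space set"
  assumes "x \<in> \<Omega>" "y \<notin> \<Omega>"
  shows "infdist x (frontier \<Omega>) \<le> dist x y"
proof -
  have "closed_segment x y \<inter> frontier \<Omega> \<noteq> {}"
    by (rule connected_Int_frontier) (use assms in auto)
  then obtain z where z: "z \<in> closed_segment x y" "z \<in> frontier \<Omega>" by auto
  have "infdist x (frontier \<Omega>) \<le> dist x z" by (rule infdist_le) fact
  also have "\<dots> \<le> dist x y" using dist_in_closed_segment[OF z(1)] by (simp add: dist_commute)
  finally show ?thesis .
qed

lemma ball_integrable:
  fixes h :: "'a::euclidean_space \<Rightarrow> real"
  assumes [measurable]: "h \<in> borel_measurable borel" and hb: "\<And>y. \<bar>h y\<bar> \<le> C"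
  shows "integrable lborel (\<lambda>x. indicator (ball (0::'a) 1) x * h (s *\<^sub>R (x /\<^sub>R norm x)))"
proof -
  have [measurable]: "ball (0::'a) 1 \<in> sets borel" by simp
  have m: "(\<lambda>x. indicator (ball (0::'a) 1) x * h (s *\<^sub>R (x /\<^sub>R norm x))) \<in> borel_measurable lborel"
    by measurable
  show ?thesis
    by (intro integrableI_bounded_set[where A = "ball 0 1" and B = C] m)
       (use hb emeasure_lborel_ball_finite[of "0::'a" 1] in \<open>auto simp: indicator_def\<close>)
qed

lemma ball_int_bound:
  fixes h :: "'a::euclidean_space \<Rightarrow> real"
  assumes [measurable]: "h \<in> borel_measurable borel" and hb: "\<And>y. \<bar>h y\<bar> \<le> C"
  shows "\<bar>\<integral>x. indicator (ball (0::'a) 1) x * h (s *\<^sub>R (x /\<^sub>R norm x)) \<partial>lborel\<bar> \<le> C * measure lborel (ball (0::'a) 1)"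
proof -
  have "\<bar>\<integral>x. indicator (ball (0::'a) 1) x * h (s *\<^sub>R (x /\<^sub>R norm x)) \<partial>lborel\<bar>
      \<le> (\<integral>x. \<bar>indicator (ball (0::'a) 1) x * h (s *\<^sub>R (x /\<^sub>R norm x))\<bar> \<partial>lborel)"
    by (rule integral_abs_bound)
  also have "\<dots> \<le> (\<integral>x. C * indicator (ball (0::'a) 1) x \<partial>lborel)"
  proof (rule integral_mono')
    show "integrable lborel (\<lambda>x. C * indicator (ball (0::'a) 1) x)"
      using emeasure_lborel_ball_finite[of "0::'a" 1]
    by (intro integrable_mult_right integrable_real_indicator) auto
  qed (use hb in \<open>auto simp: indicator_def intro: order.trans[OF abs_ge_zero]\<close>)
  also have "\<dots> = C * measure lborel (ball (0::'a) 1)"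
    using emeasure_lborel_ball_finite[of "0::'a" 1] by simp
  finally show ?thesis .
qed

lemma G_integrable:
  fixes h :: "'a::euclidean_space \<Rightarrow> real"
  assumes [measurable]: "h \<in> borel_measurable borel" and hb: "\<And>y. \<bar>h y\<bar> \<le> C" and r: "0 < r"
  shows "integrable lborel (\<lambda>s. indicator {r..<R} s * (real DIM('a) / s) *
            (\<integral>x. indicator (ball (0::'a) 1) x * h (s *\<^sub>R (x /\<^sub>R norm x)) \<partial>lborel))"
proof -
  have [measurable]: "ball (0::'a) 1 \<in> sets borel" by simp
  have m: "(\<lambda>s. indicator {r..<R} s * (real DIM('a) / s) *
            (\<integral>x. indicator (ball (0::'a) 1) x * h (s *\<^sub>R (x /\<^sub>R norm x)) \<partial>lborel)) \<in> borel_measurable lborel"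
    by measurable
  have fin: "emeasure lborel {r..<R} < \<infinity>"
    by (cases "r \<le> R") auto
  show ?thesis
proof (rule integrableI_bounded_set[where A = "{r..<R}" and B = "real DIM('a) / r * (C * measure lborel (ball (0::'a) 1))"])
  show "AE s in lborel. s \<in> {r..<R} \<longrightarrow> norm (indicator {r..<R} s * (real DIM('a) / s) *
            (\<integral>x. indicator (ball (0::'a) 1) x * h (s *\<^sub>R (x /\<^sub>R norm x)) \<partial>lborel)) \<le> real DIM('a) / r * (C * measure lborel (ball (0::'a) 1))"
  proof (intro AE_I2 impI)
    fix s assume s: "s \<in> {r..<R}"
    then have s0: "s > 0" using r by auto
    have "norm (indicator {r..<R} s * (real DIM('a) / s) *
            (\<integral>x. indicator (ball (0::'a) 1) x * h (s *\<^sub>R (x /\<^sub>R norm x)) \<partial>lborel))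
        = (real DIM('a) / s) * \<bar>\<integral>x. indicator (ball (0::'a) 1) x * h (s *\<^sub>R (x /\<^sub>R norm x)) \<partial>lborel\<bar>"
      using s s0 by (simp add: abs_mult)
    also have "\<dots> \<le> real DIM('a) / r * (C * measure lborel (ball (0::'a) 1))"
    proof (rule mult_mono)
      show "real DIM('a) / s \<le> real DIM('a) / r" using s r by (auto intro: divide_left_mono)
      show "0 \<le> real DIM('a) / r" using r by simp
    qed (use ball_int_bound[OF assms(1,2)] in auto)
    finally show "norm (indicator {r..<R} s * (real DIM('a) / s) *
            (\<integral>x. indicator (ball (0::'a) 1) x * h (s *\<^sub>R (x /\<^sub>R norm x)) \<partial>lborel)) \<le> real DIM('a) / r * (C * measure lborel (ball (0::'a) 1))" .
  qed
qed (use m fin in auto)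
qed

lemma annulus_polar_nonneg:
  fixes h :: "'a::euclidean_space \<Rightarrow> real"
  assumes hm[measurable]: "h \<in> borel_measurable borel" and h0: "\<And>y. 0 \<le> h y" and hb: "\<And>y. h y \<le> C"
    and r: "0 < r"
  shows "(\<integral>y. indicator {y. r \<le> norm y \<and> norm y < R} y * h y / norm y ^ DIM('a) \<partial>lborel) =
         (\<integral>s. indicator {r..<R} s * (real DIM('a) / s) *
            (\<integral>x. indicator (ball (0::'a) 1) x * h (s *\<^sub>R (x /\<^sub>R norm x)) \<partial>lborel) \<partial>lborel)"
proof -
  define P where "P s = (\<integral>x. indicator (ball (0::'a) 1) x * h (s *\<^sub>R (x /\<^sub>R norm x)) \<partial>lborel)" for s
  define F where "F y = indicator {y. r \<le> norm y \<and> norm y < R} y * h y / norm y ^ DIM('a)" for y :: 'a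
  have hb': "\<And>y. \<bar>h y\<bar> \<le> C" using h0 hb by (simp add: abs_of_nonneg)
  have [measurable]: "ball (0::'a) 1 \<in> sets borel" by simp
  have [measurable]: "{y::'a. r \<le> norm y \<and> norm y < R} \<in> sets borel" by measurable
  have Fm[measurable]: "F \<in> borel_measurable borel" unfolding F_def by measurable
  have F0: "0 \<le> F y" for y unfolding F_def using h0 by (auto simp: indicator_def)
  have P0: "0 \<le> P s" for s unfolding P_def using h0 by (auto intro!: integral_nonneg simp: indicator_def)
  have Pint: "\<And>s. integrable lborel (\<lambda>x. indicator (ball (0::'a) 1) x * h (s *\<^sub>R (x /\<^sub>R norm x)))"
    by (rule ball_integrable[OF hm hb'])
  have Gint: "integrable lborel (\<lambda>s. indicator {r..<R} s * (real DIM('a) / s) * P s)"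
    unfolding P_def by (rule G_integrable[OF hm hb' r])
  have G0: "0 \<le> indicator {r..<R} s * (real DIM('a) / s) * P s" for s
    using P0[of s] r by (auto simp: indicator_def)
  have "(\<integral>y. F y \<partial>lborel) = enn2real (\<integral>\<^sup>+y. ennreal (F y) \<partial>lborel)"
    by (rule integral_eq_nn_integral) (auto simp: F0)
  also have "(\<integral>\<^sup>+y. ennreal (F y) \<partial>lborel) =
     (\<integral>\<^sup>+s. indicator {0<..} s * ennreal (real DIM('a) * s ^ (DIM('a) - 1)) *
            (\<integral>\<^sup>+x. indicator (ball (0::'a) 1) x * ennreal (F (s *\<^sub>R (x /\<^sub>R norm x))) \<partial>lborel) \<partial>lborel)"
  proof -
    have m: "(\<lambda>y::'a. ennreal (F y)) \<in> borel_measurable borel" by measurable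
    show ?thesis by (simp only: polar_nn[OF m])
  qed
  also have "\<dots> = (\<integral>\<^sup>+s. ennreal (indicator {r..<R} s * (real DIM('a) / s) * P s) \<partial>lborel)"
  proof (rule nn_integral_cong)
    fix s :: real
    show "indicator {0<..} s * ennreal (real DIM('a) * s ^ (DIM('a) - 1)) *
            (\<integral>\<^sup>+x. indicator (ball (0::'a) 1) x * ennreal (F (s *\<^sub>R (x /\<^sub>R norm x))) \<partial>lborel) =
          ennreal (indicator {r..<R} s * (real DIM('a) / s) * P s)"
    proof (cases "s > 0")
      case False
      then have "s \<notin> {r..<R}" using r by auto
      then show ?thesis using False by simp
    next
      case s0: True
      have "(\<integral>\<^sup>+x. indicator (ball (0::'a) 1) x * ennreal (F (s *\<^sub>R (x /\<^sub>R norm x))) \<partial>lborel)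
          = (\<integral>\<^sup>+x. ennreal (indicator {r..<R} s / s ^ DIM('a)) * ennreal (indicator (ball (0::'a) 1) x * h (s *\<^sub>R (x /\<^sub>R norm x))) \<partial>lborel)"
      proof (rule nn_integral_cong_AE)
        show "AE x in lborel. indicator (ball (0::'a) 1) x * ennreal (F (s *\<^sub>R (x /\<^sub>R norm x))) =
            ennreal (indicator {r..<R} s / s ^ DIM('a)) * ennreal (indicator (ball (0::'a) 1) x * h (s *\<^sub>R (x /\<^sub>R norm x)))"
          using AE_lborel_singleton[of "0::'a"]
        proof eventually_elim
          case (elim x)
          have ns: "norm (s *\<^sub>R (x /\<^sub>R norm x)) = s" using elim s0 by simp
          have Fe: "F (s *\<^sub>R (x /\<^sub>R norm x)) = indicator {r..<R} s * h (s *\<^sub>R (x /\<^sub>R norm x)) / s ^ DIM('a)"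
            unfolding F_def indicator_def mem_Collect_eq ns by simp
          have hx: "0 \<le> h (s *\<^sub>R (x /\<^sub>R norm x))" by (rule h0)
          show ?case
          proof (cases "x \<in> ball 0 1 \<and> s \<in> {r..<R}")
            case True
            then have "indicator (ball (0::'a) 1) x * ennreal (F (s *\<^sub>R (x /\<^sub>R norm x))) = ennreal (1 / s ^ DIM('a) * h (s *\<^sub>R (x /\<^sub>R norm x)))"
              unfolding Fe by simp
            also have "\<dots> = ennreal (1 / s ^ DIM('a)) * ennreal (h (s *\<^sub>R (x /\<^sub>R norm x)))"
              using s0 hx by (intro ennreal_mult) auto
            finally show ?thesis using True by simp
          next
            case False
            then show ?thesis unfolding Fe by (auto simp: indicator_def)
          qed
        qed
      qed
      also have "\<dots> = ennreal (indicator {r..<R} s / s ^ DIM('a)) * (\<integral>\<^sup>+x. ennreal (indicator (ball (0::'a) 1) x * h (s *\<^sub>R (x /\<^sub>R norm x))) \<partial>lborel)"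
        by (rule nn_integral_cmult) measurable
      also have "(\<integral>\<^sup>+x. ennreal (indicator (ball (0::'a) 1) x * h (s *\<^sub>R (x /\<^sub>R norm x))) \<partial>lborel) = ennreal (P s)"
        unfolding P_def by (rule nn_integral_eq_integral[OF Pint]) (use h0 in \<open>auto simp: indicator_def\<close>)
      finally have inner: "(\<integral>\<^sup>+x. indicator (ball (0::'a) 1) x * ennreal (F (s *\<^sub>R (x /\<^sub>R norm x))) \<partial>lborel)
          = ennreal (indicator {r..<R} s / s ^ DIM('a)) * ennreal (P s)" .
      have real_eq: "real DIM('a) * s ^ (DIM('a) - 1) * (indicator {r..<R} s / s ^ DIM('a)) * P s = indicator {r..<R} s * (real DIM('a) / s) * P s"
      proof -
        have d: "DIM('a) - 1 + 1 = DIM('a)" by simp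
        have "s ^ DIM('a) = s ^ (DIM('a) - 1 + 1)" by (simp only: d)
        also have "\<dots> = s * s ^ (DIM('a) - 1)" by (simp only: power_add power_one_right mult.commute)
        finally have "s ^ DIM('a) = s * s ^ (DIM('a) - 1)" .
        then show ?thesis using s0 by (simp add: field_simps)
      qed
      have "indicator {0<..} s * ennreal (real DIM('a) * s ^ (DIM('a) - 1)) *
            (ennreal (indicator {r..<R} s / s ^ DIM('a)) * ennreal (P s))
          = ennreal (real DIM('a) * s ^ (DIM('a) - 1)) *
            (ennreal (indicator {r..<R} s / s ^ DIM('a)) * (ennreal (P s) * 1))"
        using s0 by (simp add: mult.assoc)
      also have "\<dots> = ennreal (real DIM('a) * s ^ (DIM('a) - 1) * (indicator {r..<R} s / s ^ DIM('a)) * P s) * 1"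
        using s0 P0[of s] by (intro ennreal_mult3) auto
      finally show ?thesis unfolding inner real_eq by simp
    qed
  qed
  also have "\<dots> = ennreal (\<integral>s. indicator {r..<R} s * (real DIM('a) / s) * P s \<partial>lborel)"
    by (rule nn_integral_eq_integral[OF Gint]) (use G0 in auto)
  finally have "(\<integral>y. F y \<partial>lborel) = (\<integral>s. indicator {r..<R} s * (real DIM('a) / s) * P s \<partial>lborel)"
    using G0 by (simp add: integral_nonneg)
  then show ?thesis unfolding F_def P_def .
qed

lemma annulus_integrable:
  fixes h :: "'a::euclidean_space \<Rightarrow> real"
  assumes hm[measurable]: "h \<in> borel_measurable borel" and hb: "\<And>y. \<bar>h y\<bar> \<le> C" and r: "0 < r"
  shows "integrable lborel (\<lambda>y. indicator {y. r \<le> norm y \<and> norm y < R} y * h y / norm y ^ DIM('a))"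
proof -
  have [measurable]: "{y::'a. r \<le> norm y \<and> norm y < R} \<in> sets borel" by measurable
  have C0: "0 \<le> C" using hb[of 0] by linarith
  have m: "(\<lambda>y. indicator {y. r \<le> norm y \<and> norm y < R} y * h y / norm y ^ DIM('a)) \<in> borel_measurable lborel"
    by measurable
  show ?thesis
  proof (rule integrableI_bounded_set[where A = "ball 0 R" and B = "C / r ^ DIM('a)", OF _ m])
    show "AE x in lborel. x \<in> ball 0 R \<longrightarrow> norm (indicator {y. r \<le> norm y \<and> norm y < R} x * h x / norm x ^ DIM('a)) \<le> C / r ^ DIM('a)"
    proof (intro AE_I2 impI)
      fix x :: 'a
      show "norm (indicator {y. r \<le> norm y \<and> norm y < R} x * h x / norm x ^ DIM('a)) \<le> C / r ^ DIM('a)"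
      proof (cases "r \<le> norm x \<and> norm x < R")
        case True
        then have "norm (indicator {y. r \<le> norm y \<and> norm y < R} x * h x / norm x ^ DIM('a)) = \<bar>h x\<bar> / norm x ^ DIM('a)"
          by (simp add: abs_mult)
        also have "\<dots> \<le> C / r ^ DIM('a)"
          using True r hb[of x] C0 by (intro frac_le power_mono) auto
        finally show ?thesis .
      next
        case False then show ?thesis using C0 r by (auto simp: indicator_def)
      qed
    qed
  qed (use emeasure_lborel_ball_finite[of "0::'a" R] in \<open>auto simp: indicator_def\<close>)
qed

lemma annulus_polar:
  fixes h :: "'a::euclidean_space \<Rightarrow> real"
  assumes hm[measurable]: "h \<in> borel_measurable borel" and hb: "\<And>y. \<bar>h y\<bar> \<le> C" and r: "0 < r"
  shows "(\<integral>y. indicator {y. r \<le> norm y \<and> norm y < R} y * h y / norm y ^ DIM('a) \<partial>lborel) =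
         (\<integral>s. indicator {r..<R} s * (real DIM('a) / s) *
            (\<integral>x. indicator (ball (0::'a) 1) x * h (s *\<^sub>R (x /\<^sub>R norm x)) \<partial>lborel) \<partial>lborel)"
proof -
  define hp where "hp y = max (h y) 0" for y
  define hn where "hn y = max (- h y) 0" for y
  have [measurable]: "hp \<in> borel_measurable borel" "hn \<in> borel_measurable borel"
    unfolding hp_def hn_def by measurable
  have C0: "0 \<le> C" using hb[of 0] by linarith
  have hpb: "\<And>y. \<bar>hp y\<bar> \<le> C" "\<And>y. hp y \<le> C" "\<And>y. 0 \<le> hp y"
    using hb C0 unfolding hp_def by (auto simp: abs_le_iff)
  have hnb: "\<And>y. \<bar>hn y\<bar> \<le> C" "\<And>y. hn y \<le> C" "\<And>y. 0 \<le> hn y"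
    using hb C0 unfolding hn_def by (auto simp: abs_le_iff)
  have hsplit: "h y = hp y - hn y" for y unfolding hp_def hn_def by auto
  have "(\<integral>y. indicator {y. r \<le> norm y \<and> norm y < R} y * h y / norm y ^ DIM('a) \<partial>lborel)
     = (\<integral>y. indicator {y. r \<le> norm y \<and> norm y < R} y * hp y / norm y ^ DIM('a) -
            indicator {y. r \<le> norm y \<and> norm y < R} y * hn y / norm y ^ DIM('a) \<partial>lborel)"
    by (simp only: hsplit diff_divide_distrib right_diff_distrib)
  also have "\<dots> = (\<integral>y. indicator {y. r \<le> norm y \<and> norm y < R} y * hp y / norm y ^ DIM('a) \<partial>lborel) -
                  (\<integral>y. indicator {y. r \<le> norm y \<and> norm y < R} y * hn y / norm y ^ DIM('a) \<partial>lborel)"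
    by (intro Bochner_Integration.integral_diff annulus_integrable[OF _ hpb(1) r] annulus_integrable[OF _ hnb(1) r]) auto
  also have "\<dots> = (\<integral>s. indicator {r..<R} s * (real DIM('a) / s) *
            (\<integral>x. indicator (ball (0::'a) 1) x * hp (s *\<^sub>R (x /\<^sub>R norm x)) \<partial>lborel) \<partial>lborel) -
            (\<integral>s. indicator {r..<R} s * (real DIM('a) / s) *
            (\<integral>x. indicator (ball (0::'a) 1) x * hn (s *\<^sub>R (x /\<^sub>R norm x)) \<partial>lborel) \<partial>lborel)"
    by (simp only: annulus_polar_nonneg[OF _ hpb(3) hpb(2) r] annulus_polar_nonneg[OF _ hnb(3) hnb(2) r] \<open>hp \<in> borel_measurable borel\<close> \<open>hn \<in> borel_measurable borel\<close>)
  also have "\<dots> = (\<integral>s. indicator {r..<R} s * (real DIM('a) / s) *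
            (\<integral>x. indicator (ball (0::'a) 1) x * hp (s *\<^sub>R (x /\<^sub>R norm x)) \<partial>lborel) -
            indicator {r..<R} s * (real DIM('a) / s) *
            (\<integral>x. indicator (ball (0::'a) 1) x * hn (s *\<^sub>R (x /\<^sub>R norm x)) \<partial>lborel) \<partial>lborel)"
    by (intro Bochner_Integration.integral_diff[symmetric] G_integrable[OF _ hpb(1) r] G_integrable[OF _ hnb(1) r]) auto
  also have "\<dots> = (\<integral>s. indicator {r..<R} s * (real DIM('a) / s) *
            (\<integral>x. indicator (ball (0::'a) 1) x * h (s *\<^sub>R (x /\<^sub>R norm x)) \<partial>lborel) \<partial>lborel)"
  proof (rule Bochner_Integration.integral_cong[OF refl])
    fix s :: real
    have "(\<integral>x. indicator (ball (0::'a) 1) x * h (s *\<^sub>R (x /\<^sub>R norm x)) \<partial>lborel)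
        = (\<integral>x. indicator (ball (0::'a) 1) x * hp (s *\<^sub>R (x /\<^sub>R norm x)) -
              indicator (ball (0::'a) 1) x * hn (s *\<^sub>R (x /\<^sub>R norm x)) \<partial>lborel)"
      by (simp only: hsplit right_diff_distrib)
    also have "\<dots> = (\<integral>x. indicator (ball (0::'a) 1) x * hp (s *\<^sub>R (x /\<^sub>R norm x)) \<partial>lborel) -
                    (\<integral>x. indicator (ball (0::'a) 1) x * hn (s *\<^sub>R (x /\<^sub>R norm x)) \<partial>lborel)"
      by (intro Bochner_Integration.integral_diff ball_integrable[OF _ hpb(1)] ball_integrable[OF _ hnb(1)]) auto
    finally show "indicator {r..<R} s * (real DIM('a) / s) *
            (\<integral>x. indicator (ball (0::'a) 1) x * hp (s *\<^sub>R (x /\<^sub>R norm x)) \<partial>lborel) -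
            indicator {r..<R} s * (real DIM('a) / s) *
            (\<integral>x. indicator (ball (0::'a) 1) x * hn (s *\<^sub>R (x /\<^sub>R norm x)) \<partial>lborel) =
          indicator {r..<R} s * (real DIM('a) / s) *
            (\<integral>x. indicator (ball (0::'a) 1) x * h (s *\<^sub>R (x /\<^sub>R norm x)) \<partial>lborel)"
      by (simp add: right_diff_distrib)
  qed
  finally show ?thesis .
qed

definition Jk :: "'a::euclidean_space set \<Rightarrow> ('a \<Rightarrow> real) \<Rightarrow> real \<Rightarrow> 'a \<Rightarrow> real" where
  "Jk \<Omega> h r x = (\<integral>y. indicator (ball 0 r - \<Omega>) y * h y / norm (x - y) ^ DIM('a) \<partial>lborel)"

lemma J_integrable:
  fixes h :: "'a::euclidean_space \<Rightarrow> real"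
  assumes "open \<Omega>" and hm[measurable]: "h \<in> borel_measurable borel" and hb: "\<And>y. \<bar>h y\<bar> \<le> C"
    and d: "0 < d" and dx: "\<And>y. y \<notin> \<Omega> \<Longrightarrow> d \<le> norm (x - y)"
  shows "integrable lborel (\<lambda>y. indicator (ball 0 r - \<Omega>) y * h y / norm (x - y) ^ DIM('a))"
proof -
  have [measurable]: "\<Omega> \<in> sets borel" using assms(1) by simp
  have [measurable]: "ball (0::'a) r \<in> sets borel" by simp
  have C0: "0 \<le> C" using hb[of 0] by linarith
  have m: "(\<lambda>y. indicator (ball 0 r - \<Omega>) y * h y / norm (x - y) ^ DIM('a)) \<in> borel_measurable lborel"
    by measurable
  show ?thesis
  proof (rule integrableI_bounded_set[where A = "ball 0 r" and B = "C / d ^ DIM('a)", OF _ m])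
    show "AE y in lborel. y \<in> ball 0 r \<longrightarrow> norm (indicator (ball 0 r - \<Omega>) y * h y / norm (x - y) ^ DIM('a)) \<le> C / d ^ DIM('a)"
    proof (intro AE_I2 impI)
      fix y :: 'a
      show "norm (indicator (ball 0 r - \<Omega>) y * h y / norm (x - y) ^ DIM('a)) \<le> C / d ^ DIM('a)"
      proof (cases "y \<in> ball 0 r - \<Omega>")
        case True
        then have "norm (indicator (ball 0 r - \<Omega>) y * h y / norm (x - y) ^ DIM('a)) = \<bar>h y\<bar> / norm (x - y) ^ DIM('a)"
          by (simp add: abs_mult)
        also have "\<dots> \<le> C / d ^ DIM('a)"
          using True d dx[of y] hb[of y] C0 by (intro frac_le power_mono) auto
        finally show ?thesis .
      next
        case False then show ?thesis using C0 d by simp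
      qed
    qed
  qed (use emeasure_lborel_ball_finite[of "0::'a" r] in \<open>auto simp: indicator_def\<close>)
qed

lemma J_lip:
  fixes h :: "'a::euclidean_space \<Rightarrow> real"
  assumes "open \<Omega>" and hm[measurable]: "h \<in> borel_measurable borel" and hb: "\<And>y. \<bar>h y\<bar> \<le> C"
    and d: "0 < d" and dx: "\<And>y. y \<notin> \<Omega> \<Longrightarrow> d \<le> norm (x - y)"
    and dx': "\<And>y. y \<notin> \<Omega> \<Longrightarrow> d \<le> norm (x' - y)"
  shows "\<bar>Jk \<Omega> h r x - Jk \<Omega> h r x'\<bar> \<le> C * measure lborel (ball (0::'a) r) * (real DIM('a) * dist x x' / d ^ (DIM('a) + 1))"
proof -
  have [measurable]: "\<Omega> \<in> sets borel" using assms(1) by simp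
  have C0: "0 \<le> C" using hb[of 0] by linarith
  define K where "K = C * (real DIM('a) * dist x x' / d ^ (DIM('a) + 1))"
  have K0: "0 \<le> K" unfolding K_def using C0 d by simp
  have "Jk \<Omega> h r x - Jk \<Omega> h r x' = (\<integral>y. indicator (ball 0 r - \<Omega>) y * h y / norm (x - y) ^ DIM('a) -
          indicator (ball 0 r - \<Omega>) y * h y / norm (x' - y) ^ DIM('a) \<partial>lborel)"
    unfolding Jk_def
    by (rule Bochner_Integration.integral_diff[symmetric]; rule J_integrable[OF assms(1) hm hb d]) (use dx dx' in auto)
  also have "\<bar>\<dots>\<bar> \<le> (\<integral>y. \<bar>indicator (ball 0 r - \<Omega>) y * h y / norm (x - y) ^ DIM('a) -
          indicator (ball 0 r - \<Omega>) y * h y / norm (x' - y) ^ DIM('a)\<bar> \<partial>lborel)"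
    by (rule integral_abs_bound)
  also have "\<dots> \<le> (\<integral>y. K * indicator (ball (0::'a) r) y \<partial>lborel)"
  proof (rule integral_mono')
    show "integrable lborel (\<lambda>y. K * indicator (ball (0::'a) r) y)"
      using emeasure_lborel_ball_finite[of "0::'a" r]
      by (intro integrable_mult_right integrable_real_indicator) auto
    fix y :: 'a
    show "0 \<le> K * indicator (ball (0::'a) r) y" using K0 by simp
    show "\<bar>indicator (ball 0 r - \<Omega>) y * h y / norm (x - y) ^ DIM('a) -
          indicator (ball 0 r - \<Omega>) y * h y / norm (x' - y) ^ DIM('a)\<bar> \<le> K * indicator (ball (0::'a) r) y"
    proof (cases "y \<in> ball 0 r - \<Omega>")
      case False then show ?thesis using K0 by (simp add: indicator_def)
    next
      case True
      define a where "a = norm (x - y)"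
      define b where "b = norm (x' - y)"
      have ad: "d \<le> a" "d \<le> b" using True dx dx' unfolding a_def b_def by auto
      have ab: "\<bar>a - b\<bar> \<le> dist x x'"
        unfolding a_def b_def dist_norm using norm_triangle_ineq3[of "x - y" "x' - y"] by simp
      have "\<bar>indicator (ball 0 r - \<Omega>) y * h y / norm (x - y) ^ DIM('a) -
          indicator (ball 0 r - \<Omega>) y * h y / norm (x' - y) ^ DIM('a)\<bar> = \<bar>h y\<bar> * \<bar>1 / a ^ DIM('a) - 1 / b ^ DIM('a)\<bar>"
        using True unfolding a_def b_def by (simp add: abs_mult[symmetric] right_diff_distrib)
      also have "\<dots> \<le> C * (real DIM('a) * \<bar>a - b\<bar> / min a b ^ (DIM('a) + 1))"
        using ad d C0 by (intro mult_mono hb inv_pow_diff) auto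
      also have "\<dots> \<le> C * (real DIM('a) * dist x x' / d ^ (DIM('a) + 1))"
        using ad d ab C0 by (intro mult_left_mono frac_le mult_left_mono power_mono) auto
      finally show ?thesis using True unfolding K_def by simp
    qed
  qed
  also have "\<dots> = K * measure lborel (ball (0::'a) r)"
    using emeasure_lborel_ball_finite[of "0::'a" r] by simp
  finally show ?thesis unfolding K_def by (simp add: mult_ac)
qed

lemma J_log:
  fixes h :: "'a::euclidean_space \<Rightarrow> real"
  assumes "open \<Omega>" and hm[measurable]: "h \<in> borel_measurable borel" and hb: "\<And>y. \<bar>h y\<bar> \<le> C"
    and d: "0 < d" and dx: "\<And>y. y \<notin> \<Omega> \<Longrightarrow> d \<le> norm (x - y)"
  shows "\<bar>Jk \<Omega> h r x\<bar> \<le> C * (real DIM('a) * measure lborel (ball (0::'a) 1) * ln (max (norm x + r) d / d))"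
proof -
  have [measurable]: "\<Omega> \<in> sets borel" using assms(1) by simp
  have C0: "0 \<le> C" using hb[of 0] by linarith
  define b where "b = max (norm x + r) d"
  have db: "d \<le> b" unfolding b_def by simp
  define k where "k y = indicator {d..b} (norm (x - y)) * (1 / norm (x - y) ^ DIM('a))" for y :: 'a
  have [measurable]: "k \<in> borel_measurable borel" unfolding k_def by measurable
  have k0: "0 \<le> k y" for y unfolding k_def by (simp add: indicator_def)
  have kint: "integrable lborel k"
  proof (rule integrableI_bounded_set[where A = "cball x b" and B = "1 / d ^ DIM('a)"])
    show "AE y in lborel. y \<in> cball x b \<longrightarrow> norm (k y) \<le> 1 / d ^ DIM('a)"
    proof (intro AE_I2 impI)
      fix y :: 'a
      show "norm (k y) \<le> 1 / d ^ DIM('a)"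
      proof (cases "d \<le> norm (x - y) \<and> norm (x - y) \<le> b")
        case True
        then have "0 < norm (x - y)" using d by linarith
        then show ?thesis unfolding k_def using True d
          by (auto simp: indicator_def intro!: divide_left_mono power_mono mult_pos_pos)
      next
        case False then show ?thesis unfolding k_def using d by (auto simp: indicator_def)
      qed
    qed
    show "AE y in lborel. y \<notin> cball x b \<longrightarrow> k y = 0"
      by (intro AE_I2) (auto simp: k_def indicator_def dist_norm)
  qed (use emeasure_lborel_cball_finite[of x b] in auto)
  have "(\<integral>\<^sup>+y. ennreal (k y) \<partial>lborel) = (\<integral>\<^sup>+z. ennreal (indicator {d..b} (norm (z::'a)) * (1 / norm z ^ DIM('a))) \<partial>lborel)"
  proof -
    have m: "(\<lambda>z::'a. ennreal (indicator {d..b} (norm z) * (1 / norm z ^ DIM('a)))) \<in> borel_measurable borel"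
      by measurable
    show ?thesis unfolding k_def by (simp only: nn_integral_reflect_translate[OF m])
  qed
  also have "\<dots> = (\<integral>\<^sup>+z. indicator {d..b} (norm (z::'a)) * ennreal (1 / norm z ^ DIM('a)) \<partial>lborel)"
    by (simp add: indicator_mult_ennreal)
  also have "\<dots> = ennreal (real DIM('a) * measure lborel (ball (0::'a) 1) * ln (b / d))"
    by (rule log_int[OF d db])
  finally have kn: "(\<integral>\<^sup>+y. ennreal (k y) \<partial>lborel) = ennreal (real DIM('a) * measure lborel (ball (0::'a) 1) * ln (b / d))" .
  have lnpos: "0 \<le> ln (b / d)" using d db by simp
  have kI: "(\<integral>y. k y \<partial>lborel) = real DIM('a) * measure lborel (ball (0::'a) 1) * ln (b / d)"
    using integral_eq_nn_integral[of k lborel] kn k0 lnpos by simp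
  have "\<bar>Jk \<Omega> h r x\<bar> \<le> (\<integral>y. \<bar>indicator (ball 0 r - \<Omega>) y * h y / norm (x - y) ^ DIM('a)\<bar> \<partial>lborel)"
    unfolding Jk_def by (rule integral_abs_bound)
  also have "\<dots> \<le> (\<integral>y. C * k y \<partial>lborel)"
  proof (rule integral_mono')
    show "integrable lborel (\<lambda>y. C * k y)" using kint by simp
    fix y :: 'a
    show "0 \<le> C * k y" using C0 k0 by simp
    show "\<bar>indicator (ball 0 r - \<Omega>) y * h y / norm (x - y) ^ DIM('a)\<bar> \<le> C * k y"
    proof (cases "y \<in> ball 0 r - \<Omega>")
      case False then show ?thesis using C0 k0 by simp
    next
      case True
      have "norm (x - y) \<le> norm x + norm y" by (rule norm_triangle_ineq4)
      also have "norm y < r" using True by simp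
      finally have "d \<le> norm (x - y) \<and> norm (x - y) \<le> b" using True dx[of y] unfolding b_def by auto
      then have ky: "k y = 1 / norm (x - y) ^ DIM('a)" unfolding k_def by simp
      have e: "\<bar>indicator (ball 0 r - \<Omega>) y * h y / norm (x - y) ^ DIM('a)\<bar> = \<bar>h y\<bar> / norm (x - y) ^ DIM('a)"
        using True by (simp add: abs_mult)
      have "\<bar>h y\<bar> / norm (x - y) ^ DIM('a) \<le> C / norm (x - y) ^ DIM('a)"
        using hb[of y] by (rule divide_right_mono) simp
      then show ?thesis unfolding e ky by simp
    qed
  qed
  also have "\<dots> = C * (real DIM('a) * measure lborel (ball (0::'a) 1) * ln (b / d))"
    using kI by simp
  finally show ?thesis unfolding b_def .
qed

lemma lebesgue_measurable_AE:
  fixes f g :: "'a::euclidean_space \<Rightarrow> real"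
  assumes g: "g \<in> borel_measurable lebesgue" and ae: "AE x in lebesgue. f x = g x"
  shows "f \<in> borel_measurable lebesgue"
proof -
  from ae obtain N where N: "{x \<in> space lebesgue. \<not> f x = g x} \<subseteq> N" "emeasure lebesgue N = 0" "N \<in> sets lebesgue"
    by (rule AE_E)
  have Nnull: "N \<in> null_sets lebesgue" using N by (simp add: null_sets_def)
  show ?thesis
  proof (rule borel_measurableI)
    fix S :: "real set" assume S: "open S"
    have e: "f -` S = ((g -` S) - N) \<union> (f -` S \<inter> N)"
      using N(1) by auto
    have gs: "g -` S \<in> sets lebesgue"
      using measurable_sets[OF g borel_open[OF S]] by simp
    have fn: "f -` S \<inter> N \<in> null_sets lebesgue"
      by (rule completion.complete2[OF _ Nnull]) auto
    have "((g -` S) - N) \<union> (f -` S \<inter> N) \<in> sets lebesgue"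
      using gs N(3) fn by (intro sets.Un sets.Diff) (auto dest: null_setsD2)
    then show "f -` S \<inter> space lebesgue \<in> sets lebesgue" using e by simp
  qed
qed

lemma borel_rep:
  fixes g :: "'a::euclidean_space \<Rightarrow> real"
  assumes g[measurable]: "g \<in> borel_measurable lebesgue" and "open \<Omega>"
    and ae: "AE y in lebesgue. y \<notin> \<Omega> \<longrightarrow> \<bar>g y\<bar> \<le> C" and C0: "0 \<le> C"
  obtains h where "h \<in> borel_measurable borel" "\<And>y. \<bar>h y\<bar> \<le> C" "\<And>y. y \<in> \<Omega> \<Longrightarrow> h y = 0"
    "AE y in lborel. (if y \<in> \<Omega> then 0 else g y) = h y"
proof -
  have Ob[measurable]: "\<Omega> \<in> sets borel" using assms(2) by simp
  have [measurable]: "\<Omega> \<in> sets lebesgue"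
    using Ob by (intro sets_completionI_sets) simp
  have "(\<lambda>y. if y \<in> \<Omega> then 0 else g y) \<in> borel_measurable lebesgue" by measurable
  from completion_ex_borel_measurable_real[OF this]
  obtain h0 where h0[measurable]: "h0 \<in> borel_measurable lborel" and ae0: "AE y in lborel. (if y \<in> \<Omega> then 0 else g y) = h0 y"
    by blast
  define h where "h y = (if y \<in> \<Omega> then 0 else max (- C) (min C (h0 y)))" for y
  have "h \<in> borel_measurable borel" unfolding h_def by measurable
  moreover have "\<bar>h y\<bar> \<le> C" for y unfolding h_def using C0 by auto
  moreover have "y \<in> \<Omega> \<Longrightarrow> h y = 0" for y unfolding h_def by auto
  moreover have "AE y in lborel. (if y \<in> \<Omega> then 0 else g y) = h y"
    using ae0 ae[unfolded AE_completion_iff]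
  proof eventually_elim
    case (elim y)
    then show ?case unfolding h_def by (auto split: if_splits)
  qed
  ultimately show ?thesis using that by blast
qed

lemma I_eq_J:
  fixes g h :: "'a::euclidean_space \<Rightarrow> real"
  assumes g[measurable]: "g \<in> borel_measurable lebesgue" and "open \<Omega>" and hm[measurable]: "h \<in> borel_measurable borel"
    and ae: "AE y in lborel. (if y \<in> \<Omega> then 0 else g y) = h y"
  shows "(LINT y : ball 0 r - \<Omega> | lebesgue. g y / norm (x - y) ^ DIM('a)) = Jk \<Omega> h r x"
proof -
  have [measurable]: "\<Omega> \<in> sets borel" using assms(2) by simp
  have [measurable]: "\<Omega> \<in> sets lborel" using assms(2) by simp
  have [measurable]: "ball (0::'a) r \<in> sets borel" by simp
  have m1[measurable]: "(\<lambda>y. indicator (ball 0 r - \<Omega>) y :: real) \<in> borel_measurable lebesgue"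
    by (rule measurable_completion) measurable
  have m2[measurable]: "(\<lambda>y. norm (x - y) ^ DIM('a)) \<in> borel_measurable lebesgue"
    by (rule measurable_completion) measurable
  have m3: "(\<lambda>y. indicator (ball 0 r - \<Omega>) y * h y / norm (x - y) ^ DIM('a)) \<in> borel_measurable lborel"
    by measurable
  have "(LINT y : ball 0 r - \<Omega> | lebesgue. g y / norm (x - y) ^ DIM('a))
      = (\<integral>y. indicator (ball 0 r - \<Omega>) y *\<^sub>R (g y / norm (x - y) ^ DIM('a)) \<partial>lebesgue)"
    by (simp add: set_lebesgue_integral_def)
  also have "\<dots> = (\<integral>y. indicator (ball 0 r - \<Omega>) y * h y / norm (x - y) ^ DIM('a) \<partial>lebesgue)"
  proof (rule integral_cong_AE)
    show "(\<lambda>y. indicator (ball 0 r - \<Omega>) y *\<^sub>R (g y / norm (x - y) ^ DIM('a))) \<in> borel_measurable lebesgue"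
      by measurable
    show "(\<lambda>y. indicator (ball 0 r - \<Omega>) y * h y / norm (x - y) ^ DIM('a)) \<in> borel_measurable lebesgue"
      using m3 by (rule measurable_completion)
    show "AE y in lebesgue. indicator (ball 0 r - \<Omega>) y *\<^sub>R (g y / norm (x - y) ^ DIM('a)) =
        indicator (ball 0 r - \<Omega>) y * h y / norm (x - y) ^ DIM('a)"
      using ae[THEN AE_completion]
    proof eventually_elim
      case (elim y)
      then show ?case by (auto simp: indicator_def split: if_splits)
    qed
  qed
  also have "\<dots> = Jk \<Omega> h r x"
    unfolding Jk_def by (rule integral_completion[OF m3])
  finally show ?thesis .
qed

lemma sm_eq_P:
  fixes h :: "'a::euclidean_space \<Rightarrow> real"
  assumes hm[measurable]: "h \<in> borel_measurable borel"
  shows "measure lborel (ball (0::'a) 1) * spherical_mean h s = (\<integral>x. indicator (ball (0::'a) 1) x * h (s *\<^sub>R (x /\<^sub>R norm x)) \<partial>lborel)"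
proof -
  have [measurable]: "ball (0::'a) 1 \<in> sets borel" by simp
  have V: "measure lborel (ball (0::'a) 1) > 0" using content_ball_pos[of 1 "0::'a"] by simp
  have m: "(\<lambda>x. indicator (ball (0::'a) 1) x *\<^sub>R h (s *\<^sub>R (x /\<^sub>R norm x))) \<in> borel_measurable lborel"
    by measurable
  have "(LINT x : ball 0 1 | lebesgue. h (s *\<^sub>R (x /\<^sub>R norm x))) = (\<integral>x. indicator (ball (0::'a) 1) x *\<^sub>R h (s *\<^sub>R (x /\<^sub>R norm x)) \<partial>lborel)"
    unfolding set_lebesgue_integral_def by (rule integral_completion[OF m])
  moreover have "measure lebesgue (ball (0::'a) 1) = measure lborel (ball (0::'a) 1)" by simp
  ultimately show ?thesis unfolding spherical_mean_def using V by simp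
qed

lemma sm_transfer:
  fixes g0 h :: "'a::euclidean_space \<Rightarrow> real"
  assumes hm[measurable]: "h \<in> borel_measurable borel" and ae: "AE y in lborel. g0 y = h y"
  shows "AE s in lborel. 0 < s \<longrightarrow> spherical_mean g0 s = spherical_mean h s"
proof -
  from ae obtain Z where Z: "{y \<in> space lborel. g0 y \<noteq> h y} \<subseteq> Z" "emeasure lborel Z = 0" "Z \<in> sets lborel"
    by (rule AE_E) auto
  have [measurable]: "Z \<in> sets borel" using Z(3) by simp
  have Z1: "{y. g0 y \<noteq> h y} \<subseteq> Z" using Z(1) by simp
  have zz: "h y = g0 y" if "y \<notin> Z" for y
  proof (rule ccontr)
    assume "h y \<noteq> g0 y"
    then have "y \<in> {y. g0 y \<noteq> h y}" by simp
    then show False using Z1 that by blast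
  qed
  have [measurable]: "ball (0::'a) 1 \<in> sets borel" by simp
  have m: "(\<lambda>y. indicator Z y :: ennreal) \<in> borel_measurable borel" by measurable
  define W where "W s = indicator {0<..} s * ennreal (real DIM('a) * s ^ (DIM('a) - 1)) *
            (\<integral>\<^sup>+x. indicator (ball (0::'a) 1) x * indicator Z (s *\<^sub>R (x /\<^sub>R norm x)) \<partial>lborel)" for s :: real
  have Wm: "W \<in> borel_measurable lborel" unfolding W_def by measurable
  have "(\<integral>\<^sup>+s. W s \<partial>lborel) = (\<integral>\<^sup>+y. indicator Z y \<partial>lborel)"
    unfolding W_def by (rule polar_nn[OF m])
  also have "\<dots> = 0" using Z by simp
  finally have "AE s in lborel. W s = 0" using nn_integral_0_iff_AE[OF Wm] by simp
  then show ?thesis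
  proof (rule eventually_mono, intro impI)
    fix s :: real assume W0: "W s = 0" and s0: "0 < s"
    have "ennreal (real DIM('a) * s ^ (DIM('a) - 1)) \<noteq> 0" using s0 by simp
    then have inner0: "(\<integral>\<^sup>+x. indicator (ball (0::'a) 1) x * indicator Z (s *\<^sub>R (x /\<^sub>R norm x)) \<partial>lborel) = 0"
      using W0 s0 unfolding W_def by simp
    have mi: "(\<lambda>x. indicator (ball (0::'a) 1) x * indicator Z (s *\<^sub>R (x /\<^sub>R norm x)) :: ennreal) \<in> borel_measurable lborel"
      by measurable
    have "AE x in lborel. indicator (ball (0::'a) 1) x * indicator Z (s *\<^sub>R (x /\<^sub>R norm x)) = (0::ennreal)"
      using inner0 nn_integral_0_iff_AE[OF mi] by simp
    then have aex: "AE x in lebesgue. indicator (ball (0::'a) 1) x *\<^sub>R h (s *\<^sub>R (x /\<^sub>R norm x)) = indicator (ball (0::'a) 1) x *\<^sub>R g0 (s *\<^sub>R (x /\<^sub>R norm x))"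
    proof (rule AE_completion[OF eventually_mono])
      fix x :: 'a
      assume "indicator (ball (0::'a) 1) x * indicator Z (s *\<^sub>R (x /\<^sub>R norm x)) = (0::ennreal)"
      then have "x \<in> ball 0 1 \<Longrightarrow> s *\<^sub>R (x /\<^sub>R norm x) \<notin> Z" by (auto simp: indicator_def)
      then show "indicator (ball (0::'a) 1) x *\<^sub>R h (s *\<^sub>R (x /\<^sub>R norm x)) = indicator (ball (0::'a) 1) x *\<^sub>R g0 (s *\<^sub>R (x /\<^sub>R norm x))"
        using zz by (auto simp: indicator_def)
    qed
    have mh: "(\<lambda>x. indicator (ball (0::'a) 1) x *\<^sub>R h (s *\<^sub>R (x /\<^sub>R norm x))) \<in> borel_measurable lebesgue"
      by (rule measurable_completion) measurable
    have mg: "(\<lambda>x. indicator (ball (0::'a) 1) x *\<^sub>R g0 (s *\<^sub>R (x /\<^sub>R norm x))) \<in> borel_measurable lebesgue"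
      by (rule lebesgue_measurable_AE[OF mh]) (use aex in \<open>auto elim: eventually_mono\<close>)
    have "(\<integral>x. indicator (ball (0::'a) 1) x *\<^sub>R g0 (s *\<^sub>R (x /\<^sub>R norm x)) \<partial>lebesgue) =
          (\<integral>x. indicator (ball (0::'a) 1) x *\<^sub>R h (s *\<^sub>R (x /\<^sub>R norm x)) \<partial>lebesgue)"
      by (rule integral_cong_AE[OF mg mh]) (use aex in \<open>auto elim: eventually_mono\<close>)
    then show "spherical_mean g0 s = spherical_mean h s"
      unfolding spherical_mean_def set_lebesgue_integral_def by simp
  qed
qed

lemma tail_small:
  fixes \<Phi> :: "real \<Rightarrow> ennreal"
  assumes [measurable]: "\<Phi> \<in> borel_measurable borel"
    and fin: "(\<integral>\<^sup>+s. \<Phi> s * indicator {1..} s \<partial>lborel) < \<infinity>"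
    and e: "0 < e"
  shows "\<exists>M\<ge>1. \<forall>r\<ge>M. (\<integral>\<^sup>+s. \<Phi> s * indicator {r..} s \<partial>lborel) < e"
proof -
  define f where "f n s = \<Phi> s * indicator {1 + real n..} s" for n :: nat and s :: real
  have dec: "decseq f"
    unfolding f_def by (intro decseq_SucI le_funI mult_left_mono) (auto simp: indicator_def)
  have fm: "\<And>i. f i \<in> borel_measurable lborel" unfolding f_def by measurable
  have f0: "(\<integral>\<^sup>+s. f 0 s \<partial>lborel) < \<infinity>" using fin unfolding f_def by simp
  have "(\<integral>\<^sup>+s. (INF n. f n s) \<partial>lborel) = (INF n. integral\<^sup>N lborel (f n))"
    by (rule nn_integral_monotone_convergence_INF_decseq[OF dec fm f0])
  moreover have "(INF n. f n s) = 0" for s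
  proof -
    obtain n :: nat where "s < 1 + real n" using reals_Archimedean2[of s] by (metis add.commute add_strict_increasing2 zero_le_one)
    then have "f n s = 0" unfolding f_def by simp
    then have "(INF n. f n s) \<le> 0" by (metis INF_lower2 UNIV_I order_refl)
    then show ?thesis by simp
  qed
  ultimately have "(INF n. integral\<^sup>N lborel (f n)) = 0" by simp
  then have "(INF n. integral\<^sup>N lborel (f n)) < e" using e by simp
  then obtain n where n: "integral\<^sup>N lborel (f n) < e" by (auto simp: INF_less_iff)
  show ?thesis
  proof (intro exI[of _ "1 + real n"] conjI allI impI)
    fix r assume r: "1 + real n \<le> r"
    have "(\<integral>\<^sup>+s. \<Phi> s * indicator {r..} s \<partial>lborel) \<le> integral\<^sup>N lborel (f n)"
      unfolding f_def using r by (intro nn_integral_mono mult_left_mono) (auto simp: indicator_def)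
    then show "(\<integral>\<^sup>+s. \<Phi> s * indicator {r..} s \<partial>lborel) < e" using n by simp
  qed simp
qed

lemma uniform_limit_real_cauchy:
  fixes F :: "real \<Rightarrow> 'a \<Rightarrow> real"
  assumes C: "\<And>e. e > 0 \<Longrightarrow> \<exists>M. \<forall>r R x. M \<le> r \<longrightarrow> M \<le> R \<longrightarrow> x \<in> S \<longrightarrow> dist (F r x) (F R x) < e"
  shows "\<exists>L. uniform_limit S F L at_top"
proof -
  have "\<forall>e>0. \<exists>N. \<forall>m n x. N \<le> m \<and> N \<le> n \<and> x \<in> S \<longrightarrow> dist (F (real m) x) (F (real n) x) < e"
  proof (intro allI impI)
    fix e :: real assume "e > 0"
    from C[OF this] obtain M where M: "\<forall>r R x. M \<le> r \<longrightarrow> M \<le> R \<longrightarrow> x \<in> S \<longrightarrow> dist (F r x) (F R x) < e" by blast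
    obtain N :: nat where "M \<le> real N" using real_arch_simple by blast
    then show "\<exists>N. \<forall>m n x. N \<le> m \<and> N \<le> n \<and> x \<in> S \<longrightarrow> dist (F (real m) x) (F (real n) x) < e"
      using M by (intro exI[of _ N]) (auto intro: order_trans)
  qed
  then obtain l where l: "\<forall>e>0. \<exists>N. \<forall>n x. N \<le> n \<and> x \<in> S \<longrightarrow> dist (F (real n) x) (l x) < e"
    using uniformly_convergent_eq_cauchy[of "\<lambda>x. x \<in> S" "\<lambda>n. F (real n)"] by blast
  have "uniform_limit S F l at_top"
    unfolding uniform_limit_iff
  proof (intro allI impI)
    fix e :: real assume e: "e > 0"
    from C[of "e/2"] e obtain M where M: "\<forall>r R x. M \<le> r \<longrightarrow> M \<le> R \<longrightarrow> x \<in> S \<longrightarrow> dist (F r x) (F R x) < e/2" by auto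
    from l e obtain N where N: "\<forall>n x. N \<le> n \<and> x \<in> S \<longrightarrow> dist (F (real n) x) (l x) < e/2"
      by (meson half_gt_zero)
    obtain n :: nat where n: "N \<le> n" "M \<le> real n"
      using real_arch_simple[of M] by (metis le_cases of_nat_le_iff order.trans)
    show "\<forall>\<^sub>F r in at_top. \<forall>x\<in>S. dist (F r x) (l x) < e"
      unfolding eventually_at_top_linorder
    proof (intro exI[of _ M] allI impI ballI)
      fix r x assume r: "M \<le> r" and x: "x \<in> S"
      have "dist (F r x) (l x) \<le> dist (F r x) (F (real n) x) + dist (F (real n) x) (l x)"
        by (rule dist_triangle)
      also have "\<dots> < e/2 + e/2" using M r n x N by (intro add_strict_mono) auto
      finally show "dist (F r x) (l x) < e" by simp
    qed
  qed
  then show ?thesis by blast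
qed

lemma ln_le_powr:
  fixes v a :: real
  assumes "0 < v" "0 < a"
  shows "ln v \<le> v powr a / a"
proof -
  have "a * ln v = ln (v powr a)" using assms by (simp add: ln_powr)
  also have "\<dots> \<le> v powr a - 1" using assms by (intro ln_le_minus_one) simp
  also have "\<dots> \<le> v powr a" by simp
  finally show ?thesis using assms by (simp add: field_simps)
qed

lemma sm_measurable:
  fixes h :: "'a::euclidean_space \<Rightarrow> real"
  assumes hm[measurable]: "h \<in> borel_measurable borel"
  shows "spherical_mean h \<in> borel_measurable borel"
proof -
  have [measurable]: "ball (0::'a) 1 \<in> sets borel" by simp
  have V: "measure lborel (ball (0::'a) 1) > 0" using content_ball_pos[of 1 "0::'a"] by simp
  have "spherical_mean h = (\<lambda>s. (\<integral>x. indicator (ball (0::'a) 1) x * h (s *\<^sub>R (x /\<^sub>R norm x)) \<partial>lborel) / measure lborel (ball (0::'a) 1))"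
  proof (rule ext)
    fix s
    show "spherical_mean h s = (\<integral>x. indicator (ball (0::'a) 1) x * h (s *\<^sub>R (x /\<^sub>R norm x)) \<partial>lborel) / measure lborel (ball (0::'a) 1)"
      using sm_eq_P[OF hm, of s] V by (simp add: field_simps)
  qed
  also have "\<dots> \<in> borel_measurable borel" by measurable
  finally show ?thesis .
qed

lemma J_diff_bound:
  fixes h :: "'a::euclidean_space \<Rightarrow> real"
  assumes "open \<Omega>" and hm[measurable]: "h \<in> borel_measurable borel" and hb: "\<And>y. \<bar>h y\<bar> \<le> C"
    and B0: "0 < B0" "\<Omega> \<subseteq> ball 0 B0" and x: "x \<in> \<Omega>"
    and d: "0 < d" and dx: "\<And>y. y \<notin> \<Omega> \<Longrightarrow> d \<le> norm (x - y)"
    and r: "2 * B0 + 1 \<le> r" "r \<le> R"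
    and fin: "(\<integral>\<^sup>+s. ennreal (\<bar>spherical_mean h s\<bar> / s) * indicator {1..} s \<partial>lborel) < \<infinity>"
  shows "\<bar>Jk \<Omega> h R x - Jk \<Omega> h r x\<bar> \<le>
     C * real DIM('a) * B0 * 2 ^ (DIM('a) + 1) * (real DIM('a) * measure lborel (ball (0::'a) 1) / r) +
     real DIM('a) * measure lborel (ball (0::'a) 1) * enn2real (\<integral>\<^sup>+s. ennreal (\<bar>spherical_mean h s\<bar> / s) * indicator {r..} s \<partial>lborel)"
proof -
  define V where "V = measure lborel (ball (0::'a) 1)"
  define ann where "ann = {y::'a. r \<le> norm y \<and> norm y < R}"
  define T where "T = (\<integral>\<^sup>+s. ennreal (\<bar>spherical_mean h s\<bar> / s) * indicator {r..} s \<partial>lborel)"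
  define K2 where "K2 = C * real DIM('a) * B0 * 2 ^ (DIM('a) + 1)"
  have V0: "0 \<le> V" unfolding V_def by simp
  have C0: "0 \<le> C" using hb[of 0] by linarith
  have K20: "0 \<le> K2" unfolding K2_def using C0 B0 by simp
  have r0: "0 < r" "1 \<le> r" using B0 r by linarith+
  have nx: "norm x < B0" using x B0 by auto
  have [measurable]: "\<Omega> \<in> sets borel" using assms(1) by simp
  have [measurable]: "ann \<in> sets borel" unfolding ann_def by measurable
  have smm[measurable]: "spherical_mean h \<in> borel_measurable borel" by (rule sm_measurable[OF hm])
  define fB where "fB y = indicator ann y * h y / norm (x - y) ^ DIM('a)" for y
  define A1 where "A1 y = indicator ann y * h y / norm y ^ DIM('a)" for y
  have intR: "integrable lborel (\<lambda>y. indicator (ball 0 R - \<Omega>) y * h y / norm (x - y) ^ DIM('a))"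
    by (rule J_integrable[OF assms(1) hm hb d dx])
  have intr: "integrable lborel (\<lambda>y. indicator (ball 0 r - \<Omega>) y * h y / norm (x - y) ^ DIM('a))"
    by (rule J_integrable[OF assms(1) hm hb d dx])
  have eqB: "indicator (ball 0 R - \<Omega>) y * h y / norm (x - y) ^ DIM('a) -
      indicator (ball 0 r - \<Omega>) y * h y / norm (x - y) ^ DIM('a) = fB y" for y
  proof (cases "y \<in> \<Omega>")
    case True
    then have "norm y < r" using B0 r by auto
    then show ?thesis using True unfolding fB_def ann_def by (simp add: indicator_def)
  next
    case False
    then show ?thesis using r unfolding fB_def ann_def by (auto simp: indicator_def)
  qed
  have fBe: "fB = (\<lambda>y. indicator (ball 0 R - \<Omega>) y * h y / norm (x - y) ^ DIM('a) -
      indicator (ball 0 r - \<Omega>) y * h y / norm (x - y) ^ DIM('a))"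
    using eqB by (intro ext) simp
  have JD: "Jk \<Omega> h R x - Jk \<Omega> h r x = (\<integral>y. fB y \<partial>lborel)"
    unfolding Jk_def fBe by (rule Bochner_Integration.integral_diff[symmetric, OF intR intr])
  have intB: "integrable lborel fB"
    unfolding fBe by (rule Bochner_Integration.integrable_diff[OF intR intr])
  have intA1: "integrable lborel A1"
    unfolding A1_def ann_def by (rule annulus_integrable[OF hm hb r0(1)])
  have split: "(\<integral>y. fB y \<partial>lborel) = (\<integral>y. A1 y \<partial>lborel) + (\<integral>y. fB y - A1 y \<partial>lborel)"
    by (simp add: Bochner_Integration.integral_diff[OF intB intA1])
  have T1: "T < \<infinity>"
  proof -
    have "T \<le> (\<integral>\<^sup>+s. ennreal (\<bar>spherical_mean h s\<bar> / s) * indicator {1..} s \<partial>lborel)"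
      unfolding T_def using r0 by (intro nn_integral_mono mult_left_mono) (auto simp: indicator_def)
    then show ?thesis using fin by (simp add: le_less_trans)
  qed
  have b1: "\<bar>\<integral>y. A1 y \<partial>lborel\<bar> \<le> real DIM('a) * V * enn2real T"
  proof -
    define q where "q s = indicator {r..<R} s * (real DIM('a) / s) * (V * spherical_mean h s)" for s
    have [measurable]: "q \<in> borel_measurable borel" unfolding q_def by measurable
    have "(\<integral>y. A1 y \<partial>lborel) = (\<integral>s. indicator {r..<R} s * (real DIM('a) / s) *
            (\<integral>x. indicator (ball (0::'a) 1) x * h (s *\<^sub>R (x /\<^sub>R norm x)) \<partial>lborel) \<partial>lborel)"
      unfolding A1_def ann_def by (rule annulus_polar[OF hm hb r0(1)])
    also have "\<dots> = (\<integral>s. q s \<partial>lborel)"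
      unfolding q_def V_def by (simp add: sm_eq_P[OF hm])
    finally have A1q: "(\<integral>y. A1 y \<partial>lborel) = (\<integral>s. q s \<partial>lborel)" .
    have "\<bar>\<integral>s. q s \<partial>lborel\<bar> \<le> (\<integral>s. \<bar>q s\<bar> \<partial>lborel)" by (rule integral_abs_bound)
    also have "\<dots> = enn2real (\<integral>\<^sup>+s. ennreal \<bar>q s\<bar> \<partial>lborel)"
      by (rule integral_eq_nn_integral) auto
    also have "\<dots> \<le> enn2real (ennreal (real DIM('a) * V) * T)"
    proof (rule enn2real_mono)
      show "(\<integral>\<^sup>+s. ennreal \<bar>q s\<bar> \<partial>lborel) \<le> ennreal (real DIM('a) * V) * T"
      proof -
        have "(\<integral>\<^sup>+s. ennreal \<bar>q s\<bar> \<partial>lborel) \<le> (\<integral>\<^sup>+s. ennreal (real DIM('a) * V) * (ennreal (\<bar>spherical_mean h s\<bar> / s) * indicator {r..} s) \<partial>lborel)"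
        proof (rule nn_integral_mono)
          fix s :: real
          show "ennreal \<bar>q s\<bar> \<le> ennreal (real DIM('a) * V) * (ennreal (\<bar>spherical_mean h s\<bar> / s) * indicator {r..} s)"
          proof (cases "s \<in> {r..<R}")
            case True
            then have s0: "0 < s" using r0 by auto
            have e: "\<bar>q s\<bar> = (real DIM('a) * V) * (\<bar>spherical_mean h s\<bar> / s)"
              unfolding q_def using True s0 V0 by (simp add: abs_mult)
            have "ennreal \<bar>q s\<bar> = ennreal ((real DIM('a) * V) * (\<bar>spherical_mean h s\<bar> / s))"
              by (simp only: e)
            also have "\<dots> = ennreal (real DIM('a) * V) * ennreal (\<bar>spherical_mean h s\<bar> / s)"
              by (rule ennreal_mult) (use V0 s0 in auto)
            finally have "ennreal \<bar>q s\<bar> = ennreal (real DIM('a) * V) * ennreal (\<bar>spherical_mean h s\<bar> / s)" .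
            then show ?thesis using True by simp
          next
            case False then show ?thesis unfolding q_def by simp
          qed
        qed
        also have "\<dots> = ennreal (real DIM('a) * V) * T"
          unfolding T_def by (rule nn_integral_cmult) measurable
        finally show ?thesis .
      qed
      show "ennreal (real DIM('a) * V) * T < top"
        using T1 by (simp add: ennreal_mult_less_top)
    qed
    also have "\<dots> = real DIM('a) * V * enn2real T"
      using V0 by (simp add: enn2real_mult)
    finally show ?thesis unfolding A1q .
  qed
  define k2 where "k2 y = indicator {r..} (norm y) * (1 / norm y ^ (DIM('a) + 1))" for y :: 'a
  have [measurable]: "k2 \<in> borel_measurable borel" unfolding k2_def by measurable
  have k20: "0 \<le> k2 y" for y unfolding k2_def by (simp add: indicator_def)
  have k2n: "(\<integral>\<^sup>+y. ennreal (k2 y) \<partial>lborel) = ennreal (real DIM('a) * V / r)"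
    unfolding k2_def V_def using tail_int[OF r0(1), where 'a = 'a] by (simp add: indicator_mult_ennreal)
  have k2int: "integrable lborel k2"
    by (rule integrableI_nn_integral_finite[OF _ _ k2n]) (auto simp: k20)
  have k2I: "(\<integral>y. k2 y \<partial>lborel) = real DIM('a) * V / r"
    using integral_eq_nn_integral[of k2 lborel] k2n k20 V0 r0 by simp
  have b2: "\<bar>\<integral>y. fB y - A1 y \<partial>lborel\<bar> \<le> K2 * (real DIM('a) * V / r)"
  proof -
    have "\<bar>\<integral>y. fB y - A1 y \<partial>lborel\<bar> \<le> (\<integral>y. \<bar>fB y - A1 y\<bar> \<partial>lborel)" by (rule integral_abs_bound)
    also have "\<dots> \<le> (\<integral>y. K2 * k2 y \<partial>lborel)"
    proof (rule integral_mono')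
      show "integrable lborel (\<lambda>y. K2 * k2 y)" using k2int by simp
      fix y :: 'a
      show "0 \<le> K2 * k2 y" using K20 k20 by simp
      show "\<bar>fB y - A1 y\<bar> \<le> K2 * k2 y"
      proof (cases "y \<in> ann")
        case False then show ?thesis unfolding fB_def A1_def using K20 k20 by simp
      next
        case True
        define a where "a = norm (x - y)"
        define b where "b = norm y"
        have br: "r \<le> b" using True unfolding ann_def b_def by simp
        have ab: "\<bar>a - b\<bar> \<le> B0"
          using norm_triangle_ineq3[of "x - y" "- y"] nx unfolding a_def b_def by simp
        have b2a: "b / 2 \<le> a" using ab br r by linarith
        have b2b: "b / 2 \<le> b" using br r0 by simp
        have bpos: "0 < b / 2" using br r0 by simp
        have apos: "0 < a" using b2a bpos by linarith
        have "\<bar>fB y - A1 y\<bar> = \<bar>h y\<bar> * \<bar>1 / a ^ DIM('a) - 1 / b ^ DIM('a)\<bar>"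
          using True unfolding fB_def A1_def a_def b_def by (simp add: abs_mult[symmetric] right_diff_distrib)
        also have "\<dots> \<le> C * (real DIM('a) * \<bar>a - b\<bar> / min a b ^ (DIM('a) + 1))"
          using apos bpos C0 by (intro mult_mono hb inv_pow_diff) auto
        also have "\<dots> \<le> C * (real DIM('a) * B0 / (b / 2) ^ (DIM('a) + 1))"
          using ab b2a b2b bpos C0 by (intro mult_left_mono frac_le mult_left_mono power_mono) auto
        also have "\<dots> = K2 * (1 / b ^ (DIM('a) + 1))"
          unfolding K2_def by (simp add: power_divide)
        also have "\<dots> = K2 * k2 y" unfolding k2_def b_def using br b_def by simp
        finally show ?thesis .
      qed
    qed
    also have "\<dots> = K2 * (real DIM('a) * V / r)" using k2I by simp
    finally show ?thesis .
  qed
  have "\<bar>Jk \<Omega> h R x - Jk \<Omega> h r x\<bar> \<le> \<bar>\<integral>y. A1 y \<partial>lborel\<bar> + \<bar>\<integral>y. fB y - A1 y \<partial>lborel\<bar>"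
    unfolding JD split by (rule abs_triangle_ineq)
  also have "\<dots> \<le> real DIM('a) * V * enn2real T + K2 * (real DIM('a) * V / r)"
    using b1 b2 by simp
  finally show ?thesis unfolding K2_def V_def T_def by simp
qed

lemma powr_log_bound:
  fixes d b \<epsilon> :: real
  assumes "0 < d" "d \<le> b" "0 < \<epsilon>"
  shows "d powr \<epsilon> * ln (b / d) \<le> (2 / \<epsilon>) * b powr (\<epsilon> / 2) * d powr (\<epsilon> / 2)"
proof -
  have bd: "0 < b / d" using assms by simp
  have "ln (b / d) \<le> (b / d) powr (\<epsilon> / 2) / (\<epsilon> / 2)"
    by (rule ln_le_powr) (use assms in auto)
  then have "d powr \<epsilon> * ln (b / d) \<le> d powr \<epsilon> * ((b / d) powr (\<epsilon> / 2) / (\<epsilon> / 2))"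
    by (rule mult_left_mono) simp
  also have "d powr \<epsilon> * ((b / d) powr (\<epsilon> / 2) / (\<epsilon> / 2)) = (2 / \<epsilon>) * b powr (\<epsilon> / 2) * d powr (\<epsilon> / 2)"
  proof -
    have e1: "(b / d) powr (\<epsilon> / 2) = b powr (\<epsilon> / 2) / d powr (\<epsilon> / 2)"
      by (rule powr_divide)
    have e2: "d powr \<epsilon> = d powr (\<epsilon> / 2) * d powr (\<epsilon> / 2)"
      by (simp add: powr_add[symmetric])
    have dp: "0 < d powr (\<epsilon> / 2)" using assms by simp
    show ?thesis unfolding e1 e2 using dp assms by (simp add: field_simps)
  qed
  finally show ?thesis .
qed

theorem lemma5p1:
  fixes \<Omega> :: "'a::euclidean_space set" and g :: "'a \<Rightarrow> real"
  assumes "DIM('a) \<ge> 2"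
    and "bounded \<Omega>" and "open \<Omega>" and "C2_boundary \<Omega>"
    and "g \<in> borel_measurable lebesgue"
    and "\<exists>C. AE y in lebesgue. y \<notin> \<Omega> \<longrightarrow> \<bar>g y\<bar> \<le> C"
    and "(\<integral>\<^sup>+ r \<in> {1..}. ennreal
            (\<bar>spherical_mean (\<lambda>y. if y \<in> \<Omega> then 0 else g y) r\<bar> / r) \<partial>lborel) < \<infinity>"
    and "\<epsilon> > (0::real)"
  shows "(\<forall>r > (SUP x\<in>\<Omega>. norm x) + diameter \<Omega> + 1.
            continuous_on \<Omega>
              (\<lambda>x. bdist \<Omega> x powr \<epsilon> *
                   (LINT y : ball 0 r - \<Omega> | lebesgue. g y / norm (x - y) ^ DIM('a))) \<and>
            (\<exists>G. continuous_on (closure \<Omega>) G \<and>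
                 (\<forall>x\<in>\<Omega>. G x = bdist \<Omega> x powr \<epsilon> *
                   (LINT y : ball 0 r - \<Omega> | lebesgue. g y / norm (x - y) ^ DIM('a))))) \<and>
         (\<exists>L. uniform_limit \<Omega>
                (\<lambda>r x. bdist \<Omega> x powr \<epsilon> *
                   (LINT y : ball 0 r - \<Omega> | lebesgue. g y / norm (x - y) ^ DIM('a)))
                L at_top)"
proof -
  have eps: "0 < \<epsilon>" by fact
  from assms(6) obtain C1 where C1: "AE y in lebesgue. y \<notin> \<Omega> \<longrightarrow> \<bar>g y\<bar> \<le> C1" by blast
  define C where "C = max C1 0"
  have C0: "0 \<le> C" by (simp add: C_def)
  have Cae: "AE y in lebesgue. y \<notin> \<Omega> \<longrightarrow> \<bar>g y\<bar> \<le> C"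
    using C1 by eventually_elim (auto simp: C_def)
  obtain h where hm[measurable]: "h \<in> borel_measurable borel" and hb: "\<And>y. \<bar>h y\<bar> \<le> C"
    and hae: "AE y in lborel. (if y \<in> \<Omega> then 0 else g y) = h y"
    using borel_rep[OF assms(5) assms(3) Cae C0] by blast
  have IJ: "\<And>r x. (LINT y : ball 0 r - \<Omega> | lebesgue. g y / norm (x - y) ^ DIM('a)) = Jk \<Omega> h r x"
    by (rule I_eq_J[OF assms(5) assms(3) hm hae])
  have fin: "(\<integral>\<^sup>+s. ennreal (\<bar>spherical_mean h s\<bar> / s) * indicator {1..} s \<partial>lborel) < \<infinity>"
  proof -
    have "(\<integral>\<^sup>+s. ennreal (\<bar>spherical_mean h s\<bar> / s) * indicator {1..} s \<partial>lborel) =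
        (\<integral>\<^sup>+ s. ennreal (\<bar>spherical_mean (\<lambda>y. if y \<in> \<Omega> then 0 else g y) s\<bar> / s) * indicator {1..} s \<partial>lborel)"
    proof (rule nn_integral_cong_AE)
      show "AE s in lborel. ennreal (\<bar>spherical_mean h s\<bar> / s) * indicator {1..} s =
          ennreal (\<bar>spherical_mean (\<lambda>y. if y \<in> \<Omega> then 0 else g y) s\<bar> / s) * indicator {1..} s"
        using sm_transfer[OF hm hae]
      proof eventually_elim
        case (elim s)
        then show ?case by (cases "1 \<le> s") (auto simp: indicator_def)
      qed
    qed
    then show ?thesis using assms(7) by simp
  qed
  define F where "F r x = bdist \<Omega> x powr \<epsilon> * Jk \<Omega> h r x" for r x
  have main: "(\<forall>r. continuous_on \<Omega> (F r) \<and> (\<exists>G. continuous_on (closure \<Omega>) G \<and> (\<forall>x\<in>\<Omega>. G x = F r x))) \<and>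
      (\<exists>L. uniform_limit \<Omega> F L at_top)"
  proof (cases "\<Omega> = {}")
    case True
    then show ?thesis by (auto simp: uniform_limit_iff)
  next
    case False
    obtain B0 where B0: "0 < B0" "\<Omega> \<subseteq> ball 0 B0"
      using bounded_subset_ballD[OF assms(2), of 0] by blast
    have clB: "closure \<Omega> \<subseteq> cball 0 B0"
      using B0(2) ball_subset_cball by (intro closure_minimal) auto
    have notU: "\<Omega> \<noteq> UNIV" using assms(2) by auto
    have frne: "frontier \<Omega> \<noteq> {}" by (rule frontier_not_empty[OF False notU])
    have frcl: "closed (frontier \<Omega>)" by (rule frontier_closed)
    have bd_pos: "0 < bdist \<Omega> x" if "x \<in> \<Omega>" for x
    proof -
      have "x \<notin> frontier \<Omega>" using that assms(3) by (simp add: frontier_def interior_open)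
      then show ?thesis unfolding bdist_def by (rule infdist_pos_not_in_closed[OF frcl frne])
    qed
    have bd_le: "bdist \<Omega> x \<le> norm (x - y)" if "x \<in> \<Omega>" "y \<notin> \<Omega>" for x y
      using frontier_dist[OF that] unfolding bdist_def by (simp add: dist_norm)
    have bd_lip: "\<bar>bdist \<Omega> x - bdist \<Omega> y\<bar> \<le> dist x y" for x y
      unfolding bdist_def by (rule infdist_triangle_abs)
    have bd_nn: "0 \<le> bdist \<Omega> x" for x unfolding bdist_def by (rule infdist_nonneg)
    obtain p where p: "p \<in> frontier \<Omega>" using frne by blast
    have pB: "norm p \<le> B0" using p clB by (auto simp: frontier_def)
    have bd_bound: "bdist \<Omega> x \<le> 2 * B0" if "x \<in> \<Omega>" for x
    proof -
      have "bdist \<Omega> x \<le> dist x p" unfolding bdist_def by (rule infdist_le[OF p])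
      also have "\<dots> \<le> norm x + norm p" unfolding dist_norm by (rule norm_triangle_ineq4)
      also have "norm x < B0" using that B0 by auto
      finally show ?thesis using pB by simp
    qed
    have bd_front: "bdist \<Omega> y \<le> dist y x" if "x \<in> frontier \<Omega>" for x y
      unfolding bdist_def by (rule infdist_le[OF that])
    have contF: "continuous_on \<Omega> (F r)" for r
    proof -
      have Jc: "continuous_on \<Omega> (Jk \<Omega> h r)"
        unfolding continuous_on_iff
      proof (intro ballI allI impI)
        fix x0 and e :: real assume x0: "x0 \<in> \<Omega>" and e: "0 < e"
        define d0 where "d0 = bdist \<Omega> x0"
        have d0: "0 < d0" using bd_pos[OF x0] d0_def by simp
        define Lc where "Lc = C * measure lborel (ball (0::'a) r) * (real DIM('a) / (d0/2) ^ (DIM('a) + 1))"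
        have Lc0: "0 \<le> Lc" unfolding Lc_def using C0 d0 by simp
        define \<delta> where "\<delta> = min (d0/2) (e / (Lc + 1))"
        have \<delta>0: "0 < \<delta>" unfolding \<delta>_def using d0 e Lc0 by simp
        show "\<exists>\<delta>>0. \<forall>x'\<in>\<Omega>. dist x' x0 < \<delta> \<longrightarrow> dist (Jk \<Omega> h r x') (Jk \<Omega> h r x0) < e"
        proof (intro exI[of _ \<delta>] conjI ballI impI \<delta>0)
          fix x' assume x': "x' \<in> \<Omega>" and dx': "dist x' x0 < \<delta>"
          have "bdist \<Omega> x0 - bdist \<Omega> x' \<le> dist x' x0"
            using bd_lip[of x0 x'] by (simp add: dist_commute abs_le_iff)
          moreover have "dist x' x0 < d0 / 2" using dx' unfolding \<delta>_def by simp
          ultimately have bdx': "d0/2 \<le> bdist \<Omega> x'" unfolding d0_def by simp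
          have "\<bar>Jk \<Omega> h r x' - Jk \<Omega> h r x0\<bar> \<le> C * measure lborel (ball (0::'a) r) * (real DIM('a) * dist x' x0 / (d0/2) ^ (DIM('a) + 1))"
          proof (rule J_lip[OF assms(3) hm hb])
            show "0 < d0 / 2" using d0 by simp
            fix y assume y: "y \<notin> \<Omega>"
            show "d0 / 2 \<le> norm (x' - y)" using bd_le[OF x' y] bdx' by simp
            show "d0 / 2 \<le> norm (x0 - y)" using bd_le[OF x0 y] d0 unfolding d0_def by simp
          qed
          also have "\<dots> = Lc * dist x' x0" unfolding Lc_def by (simp add: mult_ac)
          also have "\<dots> < e"
          proof -
            have "dist x' x0 < e / (Lc + 1)" using dx' unfolding \<delta>_def by simp
            then have "Lc * dist x' x0 \<le> Lc * (e / (Lc + 1))" using Lc0 by (intro mult_left_mono) auto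
            also have "\<dots> < e" using Lc0 e by (simp add: field_simps)
            finally show ?thesis .
          qed
          finally show "dist (Jk \<Omega> h r x') (Jk \<Omega> h r x0) < e" by (simp add: dist_real_def)
        qed
      qed
      have bc: "continuous_on \<Omega> (\<lambda>x. bdist \<Omega> x)" unfolding bdist_def by (intro continuous_intros)
      have pc: "continuous_on \<Omega> (\<lambda>x. bdist \<Omega> x powr \<epsilon>)"
        by (rule continuous_on_powr[OF bc continuous_on_const]) (use bd_pos in force)
      show ?thesis unfolding F_def by (intro continuous_on_mult pc Jc)
    qed
    have extF: "\<exists>G. continuous_on (closure \<Omega>) G \<and> (\<forall>x\<in>\<Omega>. G x = F r x)" for r
    proof -
      define G where "G x = (if x \<in> \<Omega> then F r x else 0)" for x
      define V where "V = measure lborel (ball (0::'a) 1)"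
      define Bb where "Bb = 3 * B0 + \<bar>r\<bar> + 1"
      define K where "K = C * (real DIM('a) * V) * ((2 / \<epsilon>) * Bb powr (\<epsilon> / 2))"
      have V0: "0 \<le> V" unfolding V_def by simp
      have K0: "0 \<le> K" unfolding K_def using C0 V0 eps by simp
      have Fb: "\<bar>F r y\<bar> \<le> K * bdist \<Omega> y powr (\<epsilon> / 2)" if y: "y \<in> \<Omega>" for y
      proof -
        define d where "d = bdist \<Omega> y"
        have d: "0 < d" unfolding d_def using bd_pos[OF y] .
        define b where "b = max (norm y + r) d"
        have db: "d \<le> b" unfolding b_def by simp
        have bBb: "b \<le> Bb"
          using bd_bound[OF y] B0 y unfolding b_def Bb_def d_def by auto
        have lnb: "ln (b / d) \<le> ln (Bb / d)"
          using d db bBb by (simp add: divide_right_mono)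
        have "\<bar>Jk \<Omega> h r y\<bar> \<le> C * (real DIM('a) * V * ln (b / d))"
          unfolding b_def V_def
          by (rule J_log[OF assms(3) hm hb d]) (use bd_le[OF y] in \<open>auto simp: d_def\<close>)
        also have "\<dots> \<le> C * (real DIM('a) * V * ln (Bb / d))"
          using lnb C0 V0 by (intro mult_left_mono) auto
        finally have Jb: "\<bar>Jk \<Omega> h r y\<bar> \<le> C * (real DIM('a) * V) * ln (Bb / d)" by (simp add: mult_ac)
        have "\<bar>F r y\<bar> = d powr \<epsilon> * \<bar>Jk \<Omega> h r y\<bar>" unfolding F_def d_def by (simp add: abs_mult)
        also have "\<dots> \<le> d powr \<epsilon> * (C * (real DIM('a) * V) * ln (Bb / d))"
          by (intro mult_left_mono Jb) simp
        also have "\<dots> = C * (real DIM('a) * V) * (d powr \<epsilon> * ln (Bb / d))" by (simp add: mult_ac)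
        also have "\<dots> \<le> C * (real DIM('a) * V) * ((2 / \<epsilon>) * Bb powr (\<epsilon> / 2) * d powr (\<epsilon> / 2))"
          using C0 V0 powr_log_bound[OF d _ eps, of Bb] db bBb by (intro mult_left_mono) auto
        also have "\<dots> = K * d powr (\<epsilon> / 2)" unfolding K_def by (simp add: mult_ac)
        finally show ?thesis unfolding d_def .
      qed
      have "continuous_on (closure \<Omega>) G"
        unfolding continuous_on_eq_continuous_within
      proof
        fix x assume x: "x \<in> closure \<Omega>"
        show "continuous (at x within closure \<Omega>) G"
        proof (cases "x \<in> \<Omega>")
          case True
          have "isCont (F r) x" using contF[of r] True assms(3) by (simp add: continuous_on_eq_continuous_at)
          moreover have "eventually (\<lambda>y. F r y = G y) (nhds x)"
            using eventually_nhds_in_open[OF assms(3) True] by eventually_elim (simp add: G_def)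
          ultimately have "isCont G x" using isCont_cong by blast
          then show ?thesis by (rule continuous_at_imp_continuous_at_within)
        next
          case False
          then have xf: "x \<in> frontier \<Omega>" using x assms(3) by (simp add: frontier_def interior_open)
          have Gx: "G x = 0" using False by (simp add: G_def)
          have "((\<lambda>y. dist y x powr (\<epsilon> / 2)) \<longlongrightarrow> dist x x powr (\<epsilon> / 2)) (at x within closure \<Omega>)"
            by (intro tendsto_powr' tendsto_dist tendsto_ident_at tendsto_const) (use eps in auto)
          then have "((\<lambda>y. dist y x powr (\<epsilon> / 2)) \<longlongrightarrow> 0) (at x within closure \<Omega>)" by simp
          then have t0: "((\<lambda>y. K * dist y x powr (\<epsilon> / 2)) \<longlongrightarrow> 0) (at x within closure \<Omega>)"
            using tendsto_mult[OF tendsto_const[of K]] by fastforce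
          have "(G \<longlongrightarrow> 0) (at x within closure \<Omega>)"
          proof (rule Lim_null_comparison[OF _ t0])
            show "\<forall>\<^sub>F y in at x within closure \<Omega>. norm (G y) \<le> K * dist y x powr (\<epsilon> / 2)"
            proof (intro always_eventually allI)
              fix y
              show "norm (G y) \<le> K * dist y x powr (\<epsilon> / 2)"
              proof (cases "y \<in> \<Omega>")
                case True
                have "norm (G y) = \<bar>F r y\<bar>" using True by (simp add: G_def)
                also have "\<dots> \<le> K * bdist \<Omega> y powr (\<epsilon> / 2)" by (rule Fb[OF True])
                also have "\<dots> \<le> K * dist y x powr (\<epsilon> / 2)"
                  using K0 eps bd_nn[of y] bd_front[OF xf, of y] by (intro mult_left_mono powr_mono2) auto
                finally show ?thesis .
              next
                case False
                then show ?thesis using K0 by (simp add: G_def)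
              qed
            qed
          qed
          then show ?thesis unfolding continuous_within Gx .
        qed
      qed
      moreover have "\<forall>x\<in>\<Omega>. G x = F r x" by (simp add: G_def)
      ultimately show ?thesis by blast
    qed
    have unif: "\<exists>L. uniform_limit \<Omega> F L at_top"
    proof (rule uniform_limit_real_cauchy)
      fix e :: real assume e: "0 < e"
      define V where "V = measure lborel (ball (0::'a) 1)"
      define NV where "NV = real DIM('a) * V"
      define D' where "D' = (2 * B0) powr \<epsilon> + 1"
      define K1 where "K1 = C * real DIM('a) * B0 * 2 ^ (DIM('a) + 1) * NV"
      define T where "T r = (\<integral>\<^sup>+s. ennreal (\<bar>spherical_mean h s\<bar> / s) * indicator {r..} s \<partial>lborel)" for r
      have V0: "0 \<le> V" unfolding V_def by simp
      have NV0: "0 \<le> NV" unfolding NV_def using V0 by simp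
      have D'0: "0 < D'" unfolding D'_def by (simp add: add_nonneg_pos)
      have K10: "0 \<le> K1" unfolding K1_def using C0 B0 NV0 by simp
      have smm[measurable]: "spherical_mean h \<in> borel_measurable borel" by (rule sm_measurable[OF hm])
      define e' where "e' = e / (2 * (NV + 1) * D')"
      have e'0: "0 < e'" unfolding e'_def using e NV0 D'0 by simp
      obtain M1 where M1: "M1 \<ge> 1" "\<forall>r\<ge>M1. T r < ennreal e'"
        using tail_small[of "\<lambda>s. ennreal (\<bar>spherical_mean h s\<bar> / s)", OF _ fin, of "ennreal e'"] e'0
        unfolding T_def by auto
      define M where "M = max (max M1 (2 * B0 + 1)) (2 * K1 * D' / e + 1)"
      have key: "\<bar>F R x - F r x\<bar> < e" if r: "M \<le> r" "r \<le> R" and x: "x \<in> \<Omega>" for r R x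
      proof -
        have r1: "2 * B0 + 1 \<le> r" "M1 \<le> r" "2 * K1 * D' / e + 1 \<le> r" using r unfolding M_def by auto
        have rpos: "0 < r" using r1 B0 by linarith
        have Tfin: "T r < \<infinity>"
        proof -
          have "T r \<le> (\<integral>\<^sup>+s. ennreal (\<bar>spherical_mean h s\<bar> / s) * indicator {1..} s \<partial>lborel)"
            unfolding T_def using r1 M1 by (intro nn_integral_mono mult_left_mono) (auto simp: indicator_def)
          then show ?thesis using fin by (simp add: le_less_trans)
        qed
        have JD: "\<bar>Jk \<Omega> h R x - Jk \<Omega> h r x\<bar> \<le> K1 / r + NV * enn2real (T r)"
        proof -
          have "\<bar>Jk \<Omega> h R x - Jk \<Omega> h r x\<bar> \<le>
             C * real DIM('a) * B0 * 2 ^ (DIM('a) + 1) * (real DIM('a) * measure lborel (ball (0::'a) 1) / r) +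
             real DIM('a) * measure lborel (ball (0::'a) 1) * enn2real (\<integral>\<^sup>+s. ennreal (\<bar>spherical_mean h s\<bar> / s) * indicator {r..} s \<partial>lborel)"
            by (rule J_diff_bound[OF assms(3) hm hb B0 x bd_pos[OF x] bd_le[OF x] r1(1) r(2) fin])
          then show ?thesis unfolding K1_def NV_def V_def T_def by (simp add: mult_ac)
        qed
        have b1: "K1 / r < e / (2 * D')"
        proof -
          have "2 * K1 * D' / e < r" using r1(3) by linarith
          then have "2 * K1 * D' < e * r" using e by (simp add: divide_less_eq mult.commute)
          then show ?thesis using rpos D'0 e by (simp add: field_simps)
        qed
        have b2: "NV * enn2real (T r) < e / (2 * D')"
        proof -
          have "enn2real (T r) < e'" using M1(2) r1(2) Tfin by simp
          then have "NV * enn2real (T r) \<le> NV * e'" using NV0 by (intro mult_left_mono) auto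
          also have "\<dots> < (NV + 1) * e'" using e'0 by (simp add: distrib_right)
          also have "\<dots> = e / (2 * D')"
          proof -
            have NV1: "NV + 1 \<noteq> 0" "0 < NV + 1" using NV0 by simp_all
            have "(NV + 1) * (e / (2 * (NV + 1) * D')) = ((NV + 1) * e) / ((NV + 1) * (2 * D'))"
              by (simp add: mult_ac)
            also have "\<dots> = e / (2 * D')" using NV1(1) by (rule nonzero_mult_divide_mult_cancel_left)
            finally show ?thesis unfolding e'_def .
          qed
          finally show ?thesis .
        qed
        have Jl: "\<bar>Jk \<Omega> h R x - Jk \<Omega> h r x\<bar> < e / D'"
          using JD b1 b2 by (simp add: field_simps)
        have pb: "bdist \<Omega> x powr \<epsilon> \<le> D'"
        proof -
          have "bdist \<Omega> x powr \<epsilon> \<le> (2 * B0) powr \<epsilon>"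
            using bd_bound[OF x] bd_nn[of x] eps by (intro powr_mono2) auto
          then show ?thesis unfolding D'_def by simp
        qed
        have "\<bar>F R x - F r x\<bar> = bdist \<Omega> x powr \<epsilon> * \<bar>Jk \<Omega> h R x - Jk \<Omega> h r x\<bar>"
          unfolding F_def by (simp add: abs_mult right_diff_distrib[symmetric])
        also have "\<dots> \<le> D' * \<bar>Jk \<Omega> h R x - Jk \<Omega> h r x\<bar>"
          using pb by (intro mult_right_mono) auto
        also have "\<dots> < D' * (e / D')" using Jl D'0 by (intro mult_strict_left_mono) auto
        also have "\<dots> = e" using D'0 by simp
        finally show ?thesis .
      qed
      show "\<exists>M. \<forall>r R x. M \<le> r \<longrightarrow> M \<le> R \<longrightarrow> x \<in> \<Omega> \<longrightarrow> dist (F r x) (F R x) < e"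
      proof (intro exI[of _ M] allI impI)
        fix r R x assume r: "M \<le> r" and R: "M \<le> R" and x: "x \<in> \<Omega>"
        show "dist (F r x) (F R x) < e"
        proof (cases "r \<le> R")
          case True
          then show ?thesis using key[OF r True x] by (simp add: dist_real_def abs_minus_commute)
        next
          case False
          then show ?thesis using key[OF R _ x, of r] by (simp add: dist_real_def)
        qed
      qed
    qed
    show ?thesis using contF extF unif by blast
  qed
  show ?thesis
    unfolding IJ using main unfolding F_def by blast
qed

end
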